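(* Let $S$ be a poset-type and let $S'\subseteq L(S)$. Then $\tau(\overline{S'})=\overline{\tau(S')}$, and this set is a poset-type.
   Context: Words: $\Sigma=\{\mathrm L,\mathrm X,\mathrm R\}$ ordered $\mathrm L<_{\mathrm{lex}}\mathrm X<_{\mathrm{lex}}\mathrm R$; $\Sigma^*$ is the set of finite words over $\Sigma$ (characters indexed from $0$), $\le_{\mathrm{lex}}$ the lexicographic order, $|w|$ the length. For $w,w'\in\Sigma^*$: $w\prec w'$ iff there is $i<\min(|w|,|w'|)$ with $(w_i,w'_i)=(\mathrm L,\mathrm R)$ and $w_j\le_{\mathrm{lex}}w'_j$ for all $j<i$; $w\preceq w'$ iff $w\prec w'$ or $w=w'$. $w\perp w'$ iff there are $i,j<\min(|w|,|w'|)$ with $w_i<_{\mathrm{lex}}w'_i$ and $w'_j<_{\mathrm{lex}}w_j$. Words $w,w'$ are related if $w\preceq w'$, $w'\preceq w$ or $w\perp w'$; otherwise unrelated. Words $u\le_{\mathrm{lex}}v$ are compatible if there is no $i<\min(|u|,|v|)$ with $(u_i,v_i)=(\mathrm R,\mathrm L)$, and, if there exists $j<\min(|u|,|v|)$ with $(u_j,v_j)=(\mathrm L,\mathrm R)$, then $u\prec v$ and $u\not\perp v$. $w|_i$ is the initial segment of length $i$; for $S\subseteq\Sigma^*$, $\overline S=\{w|_i: w\in S,0\le i\le|w|\}$; $S_i=\{w\in S:|w|=i\}$; $L(S)$ is the set of leaves of $S$ (words in $S$ with no proper extension in $S$); $w^\frown c$ is $w$ with $c$ appended, $S^\frown c=\{w^\frown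 c:w\in S\}$. Poset-type: $S\subseteq\Sigma^*$ with $S=\overline S$ such that for every $i$ with $0\le i<\max_{w\in S}|w|$ exactly one of the following holds: 1. (Leaf) there is $w\in S_i$ related to every $u\in S_i\setminus\{w\}$ and $S_{i+1}=(S_i\setminus\{w\})^\frown\mathrm X$. 2. (Branching) there is $w\in S_i$ with $S_{i+1}=\{z\in S_i:z<_{\mathrm{lex}}w\}^\frown\mathrm X\cup\{w^\frown\mathrm X,w^\frown\mathrm R\}\cup\{z\in S_i:w<_{\mathrm{lex}}z\}^\frown\mathrm R$. 3. (New $\perp$) there are unrelated $v<_{\mathrm{lex}}w$ in $S_i$ with $S_{i+1}=\{z\in S_i:z<_{\mathrm{lex}}v\}^\frown\mathrm X\cup\{v^\frown\mathrm R\}\cup\{z\in S_i:v<_{\mathrm{lex}}z<_{\mathrm{lex}}w,\ z\perp v\}^\frown\mathrm X\cup\{z\in S_i:v<_{\mathrm{lex}}z<_{\mathrm{lex}}w,\ z\not\perp v\}^\frown\mathrm R\cup\{w^\frown\mathrm X\}\cup\{z\in S_i:w<_{\mathrm{lex}}z\}^\frown\mathrm R$, and (A) for every $u\in S_i$ with $v<_{\mathrm{lex}}u<_{\mathrm{lex}}w$, $u\perp v$ or $u\perp w$. 4. (New $\preceq$) there are unrelated $v<_{\mathrm{lex}}w$ in $S_i$ with $S_{i+1}=\{z\in S_i:z<_{\mathrm{lex}}v,\ z\perp v\}^\frown\mathrm X\cup\{z\in S_i:z<_{\mathrm{lex}}v,\ z\not\perp v\}^\frown\mathrm L\cup\{v^\frown\mathrm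 L\}\cup\{z\in S_i:v<_{\mathrm{lex}}z<_{\mathrm{lex}}w\}^\frown\mathrm X\cup\{w^\frown\mathrm R\}\cup\{z\in S_i:w<_{\mathrm{lex}}z,\ w\perp z\}^\frown\mathrm X\cup\{z\in S_i:w<_{\mathrm{lex}}z,\ w\not\perp z\}^\frown\mathrm R$, and (B1) for every $u\in S_i$ with $u<_{\mathrm{lex}}v$, $u\preceq w$ or $u\perp v$; (B2) for every $u\in S_i$ with $w<_{\mathrm{lex}}u$, $v\preceq u$ or $w\perp u$. Embedding type: for $S\subseteq\Sigma^*$, a level $i$ of $\overline S$ is interesting if the structure $(\overline S_i,\le_{\mathrm{lex}},\preceq,\perp)$ is not isomorphic to $(\overline S_{i+1},\le_{\mathrm{lex}},\preceq,\perp)$, or there exist incompatible $u,v\in\overline S_{i+1}$ such that $u|_i$ and $v|_i$ are compatible. $I(S)$ is the set of interesting levels. $\tau_S\colon\overline S\to\Sigma^*$ maps a word $w$ to the word obtained from $w$ by deleting all characters whose indices are not in $I(S)$, and $\tau(S)=\tau_S[S]$. *)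

theory Defs
  imports Main
begin

datatype letter = L | X | R

fun rank :: "letter \<Rightarrow> nat" where
  "rank L = 0" | "rank X = 1" | "rank R = 2"

definition let_less :: "letter \<Rightarrow> letter \<Rightarrow> bool" where
  "let_less a b \<longleftrightarrow> rank a < rank b"

definition let_le :: "letter \<Rightarrow> letter \<Rightarrow> bool" where
  "let_le a b \<longleftrightarrow> rank a \<le> rank b"

type_synonym word = "letter list"

definition lex_le :: "word \<Rightarrow> word \<Rightarrow> bool" where
  "lex_le u v \<longleftrightarrow> (\<exists>k. v = u @ k) \<or>
     (\<exists>i. i < length u \<and> i < length v \<and> take i u = take i v \<and> let_less (u ! i) (v ! i))"

definition lex_less :: "word \<Rightarrow> word \<Rightarrow> bool" where
  "lex_less u v \<longleftrightarrow> lex_le u v \<and> u \<noteq> v"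

definition prec :: "word \<Rightarrow> word \<Rightarrow> bool" where
  "prec w w' \<longleftrightarrow> (\<exists>i. i < length w \<and> i < length w' \<and> w ! i = L \<and> w' ! i = R \<and>
       (\<forall>j<i. let_le (w ! j) (w' ! j)))"

definition preceq :: "word \<Rightarrow> word \<Rightarrow> bool" where
  "preceq w w' \<longleftrightarrow> prec w w' \<or> w = w'"

definition perp :: "word \<Rightarrow> word \<Rightarrow> bool" where
  "perp w w' \<longleftrightarrow> (\<exists>i j. i < length w \<and> i < length w' \<and> j < length w \<and> j < length w' \<and>
       let_less (w ! i) (w' ! i) \<and> let_less (w' ! j) (w ! j))"

definition related :: "word \<Rightarrow> word \<Rightarrow> bool" where
  "related w w' \<longleftrightarrow> preceq w w' \<or> preceq w' w \<or> perp w w'"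

definition unrelated :: "word \<Rightarrow> word \<Rightarrow> bool" where
  "unrelated w w' \<longleftrightarrow> \<not> related w w'"

text \<open>Compatibility of u and v, assuming u is lex-below v.\<close>
definition compat_ord :: "word \<Rightarrow> word \<Rightarrow> bool" where
  "compat_ord u v \<longleftrightarrow>
     \<not> (\<exists>i. i < length u \<and> i < length v \<and> u ! i = R \<and> v ! i = L) \<and>
     ((\<exists>j. j < length u \<and> j < length v \<and> u ! j = L \<and> v ! j = R) \<longrightarrow> prec u v \<and> \<not> perp u v)"

definition compatible :: "word \<Rightarrow> word \<Rightarrow> bool" where
  "compatible u v \<longleftrightarrow> (if lex_le u v then compat_ord u v else compat_ord v u)"

definition closure :: "word set \<Rightarrow> word set" where
  "closure S = {take i w | w i. w \<in> S \<and> i \<le> length w}"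

definition level :: "word set \<Rightarrow> nat \<Rightarrow> word set" where
  "level S i = {w \<in> S. length w = i}"

definition leaves :: "word set \<Rightarrow> word set" where
  "leaves S = {w \<in> S. \<not> (\<exists>w'\<in>S. \<exists>k. k \<noteq> [] \<and> w' = w @ k)}"

definition app :: "word set \<Rightarrow> letter \<Rightarrow> word set" where
  "app S c = (\<lambda>w. w @ [c]) ` S"

definition leaf_step :: "word set \<Rightarrow> nat \<Rightarrow> bool" where
  "leaf_step S i \<longleftrightarrow> (\<exists>w \<in> level S i. (\<forall>u \<in> level S i - {w}. related w u) \<and>
      level S (Suc i) = app (level S i - {w}) X)"

definition branch_step :: "word set \<Rightarrow> nat \<Rightarrow> bool" where
  "branch_step S i \<longleftrightarrow> (\<exists>w \<in> level S i.
      level S (Suc i) = app {z \<in> level S i. lex_less z w} X \<union> {w @ [X], w @ [R]}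
                        \<union> app {z \<in> level S i. lex_less w z} R)"

definition perp_step :: "word set \<Rightarrow> nat \<Rightarrow> bool" where
  "perp_step S i \<longleftrightarrow> (\<exists>v \<in> level S i. \<exists>w \<in> level S i. unrelated v w \<and> lex_less v w \<and>
      level S (Suc i) = app {z \<in> level S i. lex_less z v} X \<union> {v @ [R]}
         \<union> app {z \<in> level S i. lex_less v z \<and> lex_less z w \<and> perp z v} X
         \<union> app {z \<in> level S i. lex_less v z \<and> lex_less z w \<and> \<not> perp z v} R
         \<union> {w @ [X]} \<union> app {z \<in> level S i. lex_less w z} R \<and>
      (\<forall>u \<in> level S i. lex_less v u \<and> lex_less u w \<longrightarrow> perp u v \<or> perp u w))"

definition prec_step :: "word set \<Rightarrow> nat \<Rightarrow> bool" where
  "prec_step S i \<longleftrightarrow> (\<exists>v \<in> level S i. \<exists>w \<in> level S i. unrelated v w \<and> lex_less v w \<and>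
      level S (Suc i) = app {z \<in> level S i. lex_less z v \<and> perp z v} X
         \<union> app {z \<in> level S i. lex_less z v \<and> \<not> perp z v} L \<union> {v @ [L]}
         \<union> app {z \<in> level S i. lex_less v z \<and> lex_less z w} X \<union> {w @ [R]}
         \<union> app {z \<in> level S i. lex_less w z \<and> perp w z} X
         \<union> app {z \<in> level S i. lex_less w z \<and> \<not> perp w z} R \<and>
      (\<forall>u \<in> level S i. lex_less u v \<longrightarrow> preceq u w \<or> perp u v) \<and>
      (\<forall>u \<in> level S i. lex_less w u \<longrightarrow> preceq v u \<or> perp w u))"

text \<open>Poset-type. The range "0 \<le> i < max length" is rendered as: some word of S is longer than i.\<close>
definition poset_type :: "word set \<Rightarrow> bool" where
  "poset_type S \<longleftrightarrow> S = closure S \<and>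
    (\<forall>i. (\<exists>w\<in>S. i < length w) \<longrightarrow>
       length (filter id [leaf_step S i, branch_step S i, perp_step S i, prec_step S i]) = 1)"

definition isomorphic_level :: "word set \<Rightarrow> word set \<Rightarrow> bool" where
  "isomorphic_level A B \<longleftrightarrow> (\<exists>f. bij_betw f A B \<and> (\<forall>x\<in>A. \<forall>y\<in>A.
      (lex_le x y \<longleftrightarrow> lex_le (f x) (f y)) \<and> (preceq x y \<longleftrightarrow> preceq (f x) (f y)) \<and>
      (perp x y \<longleftrightarrow> perp (f x) (f y))))"

definition interesting :: "word set \<Rightarrow> nat set" where
  "interesting S = {i. \<not> isomorphic_level (level (closure S) i) (level (closure S) (Suc i)) \<or>
      (\<exists>u \<in> level (closure S) (Suc i). \<exists>v \<in> level (closure S) (Suc i).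
          \<not> compatible u v \<and> compatible (take i u) (take i v))}"

definition tau_map :: "word set \<Rightarrow> word \<Rightarrow> word" where
  "tau_map S w = nths w (interesting S)"

definition tau :: "word set \<Rightarrow> word set" where
  "tau S = tau_map S ` S"

end

theory Submission
  imports Defs
begin


definition lts :: "word \<Rightarrow> word \<Rightarrow> bool" where
  "lts a b \<longleftrightarrow> (\<exists>i<length a. i < length b \<and> let_less (a!i) (b!i))"

definition RLp :: "word \<Rightarrow> word \<Rightarrow> bool" where
  "RLp a b \<longleftrightarrow> (\<exists>i<length a. i < length b \<and> a!i = R \<and> b!i = L)"

lemma let_less_simps[simp]:
  "let_less L X" "let_less L R" "let_less X R" "\<not> let_less x x"
  "\<not> let_less X L" "\<not> let_less R L" "\<not> let_less R X"
  by (auto simp: let_less_def)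

lemma let_less_cases: "let_less x y \<longleftrightarrow> (x = L \<and> y \<noteq> L) \<or> (x = X \<and> y = R)"
  by (cases x; cases y; simp add: let_less_def)

lemma let_less_total: "x \<noteq> y \<Longrightarrow> let_less x y \<or> let_less y x"
  by (cases x; cases y; simp add: let_less_def)

lemma let_less_asym: "let_less x y \<Longrightarrow> \<not> let_less y x"
  by (cases x; cases y; simp add: let_less_def)

lemma lex_le_refl[simp]: "lex_le a a"
  unfolding lex_le_def by auto

lemma let_le_iff: "let_le x y \<longleftrightarrow> \<not> let_less y x"
  by (cases x; cases y; simp add: let_less_def let_le_def)

lemma nth_snoc_lt: "i < length a \<Longrightarrow> (a @ [x]) ! i = a ! i"
  by (simp add: nth_append)

lemma lts_snoc:
  assumes "length a = length b"
  shows "lts (a@[x]) (b@[y]) \<longleftrightarrow> lts a b \<or> let_less x y"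
proof
  assume "lts (a@[x]) (b@[y])"
  then obtain i where i: "i < length a + 1" "let_less ((a@[x])!i) ((b@[y])!i)"
    using assms by (auto simp: lts_def)
  show "lts a b \<or> let_less x y"
  proof (cases "i < length a")
    case True then show ?thesis using i assms by (auto simp: lts_def nth_append)
  next
    case False then have "i = length a" using i by simp
    then show ?thesis using i assms by (simp add: nth_append)
  qed
next
  assume "lts a b \<or> let_less x y"
  then show "lts (a@[x]) (b@[y])"
  proof
    assume "lts a b"
    then obtain i where "i < length a" "let_less (a!i) (b!i)" using assms by (auto simp: lts_def)
    then show ?thesis using assms unfolding lts_def
      by (intro exI[of _ i]) (simp add: nth_append)
  next
    assume "let_less x y"
    then show ?thesis using assms unfolding lts_def
      by (intro exI[of _ "length a"]) (simp add: nth_append)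
  qed
qed

lemma RLp_snoc:
  assumes "length a = length b"
  shows "RLp (a@[x]) (b@[y]) \<longleftrightarrow> RLp a b \<or> (x = R \<and> y = L)"
proof
  assume "RLp (a@[x]) (b@[y])"
  then obtain i where i: "i < length a + 1" "(a@[x])!i = R" "(b@[y])!i = L"
    using assms by (auto simp: RLp_def)
  show "RLp a b \<or> (x = R \<and> y = L)"
  proof (cases "i < length a")
    case True then show ?thesis using i assms by (auto simp: RLp_def nth_append)
  next
    case False then have "i = length a" using i by simp
    then show ?thesis using i assms by (simp add: nth_append)
  qed
next
  assume "RLp a b \<or> (x = R \<and> y = L)"
  then show "RLp (a@[x]) (b@[y])"
  proof
    assume "RLp a b"
    then obtain i where "i < length a" "a!i = R" "b!i = L" using assms by (auto simp: RLp_def)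
    then show ?thesis using assms unfolding RLp_def
      by (intro exI[of _ i]) (simp add: nth_append)
  next
    assume "x = R \<and> y = L"
    then show ?thesis using assms unfolding RLp_def
      by (intro exI[of _ "length a"]) (simp add: nth_append)
  qed
qed

lemma perp_lts: "length a = length b \<Longrightarrow> perp a b \<longleftrightarrow> lts a b \<and> lts b a"
  unfolding perp_def lts_def by auto

lemma perp_snoc:
  "length a = length b \<Longrightarrow>
   perp (a@[x]) (b@[y]) \<longleftrightarrow> (lts a b \<or> let_less x y) \<and> (lts b a \<or> let_less y x)"
  by (simp add: perp_lts lts_snoc)

lemma prec_snoc:
  assumes "length a = length b"
  shows "prec (a@[x]) (b@[y]) \<longleftrightarrow> prec a b \<or> (\<not> lts b a \<and> x = L \<and> y = R)"
proof
  assume "prec (a@[x]) (b@[y])"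
  then obtain i where i: "i < length a + 1" "(a@[x])!i = L" "(b@[y])!i = R"
     "\<forall>j<i. let_le ((a@[x])!j) ((b@[y])!j)"
    using assms by (auto simp: prec_def)
  show "prec a b \<or> (\<not> lts b a \<and> x = L \<and> y = R)"
  proof (cases "i < length a")
    case True then show ?thesis using i assms unfolding prec_def
      by (intro disjI1 exI[of _ i]) (auto simp: nth_append)
  next
    case False then have "i = length a" using i by simp
    then show ?thesis using i assms unfolding lts_def
      by (auto simp: nth_append let_le_iff)
  qed
next
  assume "prec a b \<or> (\<not> lts b a \<and> x = L \<and> y = R)"
  then show "prec (a@[x]) (b@[y])"
  proof
    assume "prec a b"
    then obtain i where "i < length a" "a!i = L" "b!i = R" "\<forall>j<i. let_le (a!j) (b!j)"
      using assms by (auto simp: prec_def)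
    then show ?thesis using assms unfolding prec_def
      by (intro exI[of _ i]) (simp add: nth_append)
  next
    assume "\<not> lts b a \<and> x = L \<and> y = R"
    then show ?thesis using assms unfolding prec_def lts_def
      by (intro exI[of _ "length a"]) (auto simp: nth_append let_le_iff)
  qed
qed

lemma lex_le_eqlen:
  "length a = length b \<Longrightarrow> lex_le a b \<longleftrightarrow> a = b \<or>
     (\<exists>i<length a. take i a = take i b \<and> let_less (a!i) (b!i))"
  unfolding lex_le_def by auto

lemma take_snoc_le: "i \<le> length a \<Longrightarrow> take i (a@[x]) = take i a" by simp

lemma lex_le_snoc:
  assumes "length a = length b"
  shows "lex_le (a@[x]) (b@[y]) \<longleftrightarrow> (lex_le a b \<and> a \<noteq> b) \<or> (a = b \<and> let_le x y)"
proof
  assume "lex_le (a@[x]) (b@[y])"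
  then have "a@[x] = b@[y] \<or> (\<exists>i<length a + 1. take i (a@[x]) = take i (b@[y]) \<and>
            let_less ((a@[x])!i) ((b@[y])!i))" using assms by (simp add: lex_le_eqlen)
  then show "(lex_le a b \<and> a \<noteq> b) \<or> (a = b \<and> let_le x y)"
  proof
    assume "a@[x] = b@[y]" then show ?thesis by (simp add: let_le_def)
  next
    assume "\<exists>i<length a + 1. take i (a@[x]) = take i (b@[y]) \<and> let_less ((a@[x])!i) ((b@[y])!i)"
    then obtain i where i: "i < length a + 1" "take i (a@[x]) = take i (b@[y])"
       "let_less ((a@[x])!i) ((b@[y])!i)" by blast
    show ?thesis
    proof (cases "i < length a")
      case True
      then have "take i a = take i b" "let_less (a!i) (b!i)" using i assms by (auto simp: nth_append)
      moreover have "a \<noteq> b" using calculation by auto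
      ultimately show ?thesis using True assms by (auto simp: lex_le_eqlen)
    next
      case False then have "i = length a" using i by simp
      then show ?thesis using i assms by (auto simp: nth_append let_le_iff let_less_def)
    qed
  qed
next
  assume "(lex_le a b \<and> a \<noteq> b) \<or> (a = b \<and> let_le x y)"
  then show "lex_le (a@[x]) (b@[y])"
  proof
    assume "lex_le a b \<and> a \<noteq> b"
    then obtain i where i: "i < length a" "take i a = take i b" "let_less (a!i) (b!i)"
      using assms by (auto simp: lex_le_eqlen)
    have "take i (a@[x]) = take i (b@[y])" "let_less ((a@[x])!i) ((b@[y])!i)"
      using i assms by (auto simp: nth_append)
    moreover have "i < length (a@[x])" using i by simp
    ultimately show ?thesis using assms lex_le_eqlen[of "a@[x]" "b@[y]"] by auto
  next
    assume "a = b \<and> let_le x y"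
    then show ?thesis using assms
    proof (cases "x = y")
      case False
      then have "let_less x y" using \<open>a = b \<and> let_le x y\<close> let_less_total by (auto simp: let_le_iff)
      moreover have "take (length b) (a@[x]) = take (length b) (b@[y])" "length b < length (a@[x])"
        using \<open>a = b \<and> let_le x y\<close> by auto
      ultimately show ?thesis using \<open>a = b \<and> let_le x y\<close> assms lex_le_eqlen[of "a@[x]" "b@[y]"]
        by (auto simp: nth_append)
    qed auto
  qed
qed

lemma lex_less_snoc:
  assumes "length a = length b"
  shows "lex_less (a@[x]) (b@[y]) \<longleftrightarrow> lex_less a b \<or> (a = b \<and> let_less x y)"
  using assms let_less_total let_less_asym by (auto simp: lex_less_def lex_le_snoc let_le_iff)


lemma snoc_cases_len: "length a = Suc n \<Longrightarrow> \<exists>a0 x. a = a0 @ [x] \<and> length a0 = n"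
  by (cases a rule: rev_exhaust) auto

lemma lex_le_total: "length a = length b \<Longrightarrow> lex_le a b \<or> lex_le b a"
proof (induction a arbitrary: b rule: rev_induct)
  case Nil then show ?case by simp
next
  case (snoc x a)
  then obtain b0 y where b: "b = b0@[y]" "length b0 = length a"
    using snoc_cases_len[of b "length a"] by auto
  have "lex_le a b0 \<or> lex_le b0 a" using snoc b by auto
  then show ?case using b let_less_total let_less_asym
    by (cases "a = b0") (auto simp: lex_le_snoc let_le_iff)
qed

lemma lex_le_antisym: "length a = length b \<Longrightarrow> lex_le a b \<Longrightarrow> lex_le b a \<Longrightarrow> a = b"
proof (induction a arbitrary: b rule: rev_induct)
  case Nil then show ?case by simp
next
  case (snoc x a)
  then obtain b0 y where b: "b = b0@[y]" "length b0 = length a"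
    using snoc_cases_len[of b "length a"] by auto
  show ?case using snoc b let_less_total by (auto simp: lex_le_snoc let_le_iff)
qed

lemma lex_le_trans: "length a = length b \<Longrightarrow> length b = length c \<Longrightarrow>
   lex_le a b \<Longrightarrow> lex_le b c \<Longrightarrow> lex_le a c"
proof (induction a arbitrary: b c rule: rev_induct)
  case Nil then show ?case by simp
next
  case (snoc x a)
  then obtain b0 y where b: "b = b0@[y]" "length b0 = length a"
    using snoc_cases_len[of b "length a"] by auto
  then obtain c0 z where c: "c = c0@[z]" "length c0 = length a"
    using snoc_cases_len[of c "length a"] snoc by auto
  have ih: "lex_le a b0 \<Longrightarrow> lex_le b0 c0 \<Longrightarrow> lex_le a c0" using snoc.IH[of b0 c0] b c by simp
  have anti: "lex_le a b0 \<Longrightarrow> lex_le b0 a \<Longrightarrow> a = b0" using lex_le_antisym[of a b0] b by simp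
  have p1: "(lex_le a b0 \<and> a \<noteq> b0) \<or> (a = b0 \<and> let_le x y)"
    using snoc.prems b by (simp add: lex_le_snoc)
  have p2: "(lex_le b0 c0 \<and> b0 \<noteq> c0) \<or> (b0 = c0 \<and> let_le y z)"
    using snoc.prems b c by (simp add: lex_le_snoc)
  have "(lex_le a c0 \<and> a \<noteq> c0) \<or> (a = c0 \<and> let_le x z)"
  proof -
    { assume q1: "lex_le a b0" "a \<noteq> b0" and q2: "lex_le b0 c0" "b0 \<noteq> c0"
      then have "lex_le a c0" using ih by blast
      moreover have "a \<noteq> c0" using q1 q2 anti by blast
      ultimately have ?thesis by blast }
    moreover
    { assume "a = c0 \<or> a = b0 \<or> b0 = c0"
      then have ?thesis using p1 p2 anti by (auto simp: let_le_def) }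
    ultimately show ?thesis using p1 p2 by blast
  qed
  then show ?case using b c snoc.prems by (simp add: lex_le_snoc)
qed

lemma lex_less_trans: "length a = length b \<Longrightarrow> length b = length c \<Longrightarrow>
   lex_less a b \<Longrightarrow> lex_less b c \<Longrightarrow> lex_less a c"
  unfolding lex_less_def using lex_le_trans lex_le_antisym by metis

lemma lex_less_asym: "length a = length b \<Longrightarrow> lex_less a b \<Longrightarrow> \<not> lex_less b a"
  unfolding lex_less_def using lex_le_antisym by metis

lemma lex_less_trich: "length a = length b \<Longrightarrow> lex_less a b \<or> a = b \<or> lex_less b a"
  unfolding lex_less_def using lex_le_total by metis

lemma lex_le_iff_less: "lex_le a b \<longleftrightarrow> lex_less a b \<or> a = b"
  unfolding lex_less_def by auto

lemma lex_less_lts: "length a = length b \<Longrightarrow> lex_less a b \<Longrightarrow> lts a b"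
  unfolding lex_less_def lex_le_eqlen lts_def by auto

lemma lts_irrefl[simp]: "\<not> lts a a"
  unfolding lts_def by auto

lemma prec_RLp: "prec a b \<Longrightarrow> RLp b a"
  unfolding prec_def RLp_def by auto

lemma compat_ord_alt:
  "compat_ord u v \<longleftrightarrow> \<not> RLp u v \<and> (RLp v u \<longrightarrow> prec u v \<and> \<not> perp u v)"
  unfolding compat_ord_def RLp_def by auto

lemma prec_irrefl[simp]: "\<not> prec a a"
  unfolding prec_def by auto

lemma perp_irrefl[simp]: "\<not> perp a a"
  unfolding perp_def using let_less_asym by blast

lemma perp_sym: "perp a b \<longleftrightarrow> perp b a"
  unfolding perp_def by blast


definition InvA :: "'a set \<Rightarrow> ('a\<Rightarrow>'a\<Rightarrow>bool) \<Rightarrow> ('a\<Rightarrow>'a\<Rightarrow>bool) \<Rightarrow> ('a\<Rightarrow>'a\<Rightarrow>bool) \<Rightarrow> bool" where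
  "InvA A lt P Q \<longleftrightarrow>
    (\<forall>a\<in>A. \<forall>b\<in>A. lt a b \<longrightarrow> \<not> P b a \<and> \<not> (P a b \<and> Q a b)) \<and>
    (\<forall>a\<in>A. \<forall>b\<in>A. \<forall>c\<in>A. lt a b \<longrightarrow> lt b c \<longrightarrow>
       (P a b \<and> P b c \<longrightarrow> P a c) \<and> (\<not> Q a b \<and> Q a c \<longrightarrow> Q b c) \<and>
       (P a b \<and> \<not> P a c \<longrightarrow> Q b c) \<and> (\<not> P a b \<and> \<not> Q a b \<and> \<not> P a c \<and> \<not> Q a c \<longrightarrow> \<not> P b c))"

definition slin :: "'a set \<Rightarrow> ('a\<Rightarrow>'a\<Rightarrow>bool) \<Rightarrow> bool" where
  "slin A lt \<longleftrightarrow> (\<forall>a\<in>A. \<not> lt a a) \<and> (\<forall>a\<in>A. \<forall>b\<in>A. lt a b \<or> a = b \<or> lt b a) \<and>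
     (\<forall>a\<in>A. \<forall>b\<in>A. \<forall>c\<in>A. lt a b \<longrightarrow> lt b c \<longrightarrow> lt a c)"

definition cP :: "('a\<Rightarrow>'a\<Rightarrow>bool) \<Rightarrow> ('a\<Rightarrow>'a\<Rightarrow>bool) \<Rightarrow> 'a \<Rightarrow> 'a \<Rightarrow> 'a \<Rightarrow> letter" where
  "cP lt Q v w z = (if lt z v then X else if z = v then R else if lt z w then (if Q v z then X else R)
      else if z = w then X else R)"

definition Pn :: "('a\<Rightarrow>'a\<Rightarrow>bool) \<Rightarrow> ('a\<Rightarrow>'a\<Rightarrow>bool) \<Rightarrow> ('a \<Rightarrow> letter) \<Rightarrow> 'a \<Rightarrow> 'a \<Rightarrow> bool" where
  "Pn P Q c a b \<longleftrightarrow> P a b \<or> (\<not> Q a b \<and> c a = L \<and> c b = R)"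

definition Qn :: "('a\<Rightarrow>'a\<Rightarrow>bool) \<Rightarrow> ('a \<Rightarrow> letter) \<Rightarrow> 'a \<Rightarrow> 'a \<Rightarrow> bool" where
  "Qn Q c a b \<longleftrightarrow> Q a b \<or> let_less (c b) (c a)"

lemma InvA_tri: "InvA A lt P Q \<Longrightarrow> x\<in>A \<Longrightarrow> y\<in>A \<Longrightarrow> z\<in>A \<Longrightarrow> lt x y \<longrightarrow> lt y z \<longrightarrow>
       (P x y \<and> P y z \<longrightarrow> P x z) \<and> (\<not> Q x y \<and> Q x z \<longrightarrow> Q y z) \<and>
       (P x y \<and> \<not> P x z \<longrightarrow> Q y z) \<and> (\<not> P x y \<and> \<not> Q x y \<and> \<not> P x z \<and> \<not> Q x z \<longrightarrow> \<not> P y z)"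
  unfolding InvA_def by blast

lemma InvA_pair: "InvA A lt P Q \<Longrightarrow> x\<in>A \<Longrightarrow> y\<in>A \<Longrightarrow> lt x y \<longrightarrow> \<not> P y x \<and> \<not> (P x y \<and> Q x y)"
  unfolding InvA_def by blast

lemma slin_tri: "slin A lt \<Longrightarrow> x\<in>A \<Longrightarrow> y\<in>A \<Longrightarrow> z\<in>A \<Longrightarrow> lt x y \<longrightarrow> lt y z \<longrightarrow> lt x z"
  unfolding slin_def by blast

lemma slin_pair: "slin A lt \<Longrightarrow> x\<in>A \<Longrightarrow> y\<in>A \<Longrightarrow> lt x y \<or> x = y \<or> lt y x"
  unfolding slin_def by blast

lemma slin_irr: "slin A lt \<Longrightarrow> x\<in>A \<Longrightarrow> \<not> lt x x"
  unfolding slin_def by blast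

lemma InvA_intro:
  assumes "\<And>a b. a\<in>A \<Longrightarrow> b\<in>A \<Longrightarrow> lt a b \<Longrightarrow> \<not> P b a"
    "\<And>a b. a\<in>A \<Longrightarrow> b\<in>A \<Longrightarrow> lt a b \<Longrightarrow> \<not> (P a b \<and> Q a b)"
    "\<And>a b c. a\<in>A \<Longrightarrow> b\<in>A \<Longrightarrow> c\<in>A \<Longrightarrow> lt a b \<Longrightarrow> lt b c \<Longrightarrow> P a b \<Longrightarrow> P b c \<Longrightarrow> P a c"
    "\<And>a b c. a\<in>A \<Longrightarrow> b\<in>A \<Longrightarrow> c\<in>A \<Longrightarrow> lt a b \<Longrightarrow> lt b c \<Longrightarrow> \<not> Q a b \<Longrightarrow> Q a c \<Longrightarrow> Q b c"
    "\<And>a b c. a\<in>A \<Longrightarrow> b\<in>A \<Longrightarrow> c\<in>A \<Longrightarrow> lt a b \<Longrightarrow> lt b c \<Longrightarrow> P a b \<Longrightarrow> \<not> P a c \<Longrightarrow> Q b c"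
    "\<And>a b c. a\<in>A \<Longrightarrow> b\<in>A \<Longrightarrow> c\<in>A \<Longrightarrow> lt a b \<Longrightarrow> lt b c \<Longrightarrow> \<not> P a b \<Longrightarrow> \<not> Q a b \<Longrightarrow> \<not> P a c \<Longrightarrow> \<not> Q a c \<Longrightarrow> \<not> P b c"
  shows "InvA A lt P Q"
  unfolding InvA_def
  apply (intro conjI ballI impI)
  using assms by simp_all

lemma perp_abs:
  assumes inv: "InvA A lt P Q" and sl: "slin A lt" and mv: "v \<in> A" and mw: "w \<in> A" and vw: "lt v w"
    and un: "\<not> P v w" "\<not> Q v w"
    and cA: "\<forall>u\<in>A. lt v u \<and> lt u w \<longrightarrow> Q v u \<or> Q u w"
  shows "InvA A lt (\<lambda>x y. lt x y \<and> P x y) (\<lambda>x y. lt x y \<and> (Q x y \<or> (x = v \<and> y = w)))"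
proof (rule InvA_intro)
  fix a b assume ma: "a \<in> A" and mb: "b \<in> A" and ab: "lt a b"
  show "\<not> (lt b a \<and> P b a)" using slin_tri[OF sl ma mb ma] slin_irr[OF sl ma] ab by blast
  show "\<not> ((lt a b \<and> P a b) \<and> lt a b \<and> (Q a b \<or> a = v \<and> b = w))"
    using InvA_pair[OF inv ma mb] ab un by blast
next
  fix a b c assume ma: "a \<in> A" and mb: "b \<in> A" and mc: "c \<in> A" and ab: "lt a b" and bc: "lt b c"
  note t = InvA_tri[OF inv ma mb mc, rule_format, OF ab bc]
  have ac: "lt a c" using slin_tri[OF sl ma mb mc] ab bc by blast
  show "lt a b \<and> P a b \<Longrightarrow> lt b c \<and> P b c \<Longrightarrow> lt a c \<and> P a c" using t ac by blast
  show "\<not> (lt a b \<and> (Q a b \<or> a = v \<and> b = w)) \<Longrightarrow> lt a c \<and> (Q a c \<or> a = v \<and> c = w) \<Longrightarrow>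
      lt b c \<and> (Q b c \<or> b = v \<and> c = w)"
    using t ac ab bc cA[rule_format, OF mb] by blast
  show "lt a b \<and> P a b \<Longrightarrow> \<not> (lt a c \<and> P a c) \<Longrightarrow> lt b c \<and> (Q b c \<or> b = v \<and> c = w)"
    using t ac bc by blast
  show "\<not> (lt a b \<and> P a b) \<Longrightarrow> \<not> (lt a b \<and> (Q a b \<or> a = v \<and> b = w)) \<Longrightarrow> \<not> (lt a c \<and> P a c) \<Longrightarrow>
    \<not> (lt a c \<and> (Q a c \<or> a = v \<and> c = w)) \<Longrightarrow> \<not> (lt b c \<and> P b c)"
    using t ac ab by blast
qed

lemma prec_abs:
  assumes inv: "InvA A lt P Q" and sl: "slin A lt" and mv: "v \<in> A" and mw: "w \<in> A" and vw: "lt v w"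
    and un: "\<not> P v w" "\<not> Q v w"
    and B1: "\<forall>u\<in>A. lt u v \<longrightarrow> P u w \<or> Q u v"
    and B2: "\<forall>u\<in>A. lt w u \<longrightarrow> P v u \<or> Q w u"
  shows "InvA A lt (\<lambda>x y. lt x y \<and> (P x y \<or> (x = v \<and> y = w))) (\<lambda>x y. lt x y \<and> Q x y)"
proof (rule InvA_intro)
  fix a b assume ma: "a \<in> A" and mb: "b \<in> A" and ab: "lt a b"
  show "\<not> (lt b a \<and> (P b a \<or> b = v \<and> a = w))" using slin_tri[OF sl ma mb ma] slin_irr[OF sl ma] ab by blast
  show "\<not> ((lt a b \<and> (P a b \<or> a = v \<and> b = w)) \<and> lt a b \<and> Q a b)"
    using InvA_pair[OF inv ma mb] ab un by blast
next
  fix a b c assume ma: "a \<in> A" and mb: "b \<in> A" and mc: "c \<in> A" and ab: "lt a b" and bc: "lt b c"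
  note t = InvA_tri[OF inv ma mb mc, rule_format, OF ab bc]
  have ac: "lt a c" using slin_tri[OF sl ma mb mc] ab bc by blast
  show "lt a b \<and> (P a b \<or> a = v \<and> b = w) \<Longrightarrow> lt b c \<and> (P b c \<or> b = v \<and> c = w) \<Longrightarrow>
      lt a c \<and> (P a c \<or> a = v \<and> c = w)"
    using t ac B1[rule_format, OF ma] B2[rule_format, OF mc] InvA_pair[OF inv ma mb] InvA_pair[OF inv mb mc] bc ab by blast
  show "\<not> (lt a b \<and> Q a b) \<Longrightarrow> lt a c \<and> Q a c \<Longrightarrow> lt b c \<and> Q b c"
    using t bc ab by blast
  show "lt a b \<and> (P a b \<or> a = v \<and> b = w) \<Longrightarrow> \<not> (lt a c \<and> (P a c \<or> a = v \<and> c = w)) \<Longrightarrow> lt b c \<and> Q b c"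
    using t ac bc B2[rule_format, OF mc] by blast
  show "\<not> (lt a b \<and> (P a b \<or> a = v \<and> b = w)) \<Longrightarrow> \<not> (lt a b \<and> Q a b) \<Longrightarrow>
    \<not> (lt a c \<and> (P a c \<or> a = v \<and> c = w)) \<Longrightarrow> \<not> (lt a c \<and> Q a c) \<Longrightarrow> \<not> (lt b c \<and> (P b c \<or> b = v \<and> c = w))"
    using t ac ab B1[rule_format, OF ma] by blast
qed


definition cQ :: "('a\<Rightarrow>'a\<Rightarrow>bool) \<Rightarrow> ('a\<Rightarrow>'a\<Rightarrow>bool) \<Rightarrow> 'a \<Rightarrow> 'a \<Rightarrow> 'a \<Rightarrow> letter" where
  "cQ lt Q v w z = (if lt z v then (if Q z v then X else L) else if z = v then L else if lt z w then X
      else if z = w then R else (if Q w z then X else R))"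

lemma perp_letters:
  assumes inv: "InvA A lt P Q" and sl: "slin A lt" and mv: "v \<in> A" and mw: "w \<in> A" and vw: "lt v w"
    and cA: "\<forall>u\<in>A. lt v u \<and> lt u w \<longrightarrow> Q v u \<or> Q u w"
    and mx: "x \<in> A" and my: "y \<in> A" and xy: "lt x y"
  shows "(Q x y \<or> let_less (cP lt Q v w y) (cP lt Q v w x)) \<longleftrightarrow> (Q x y \<or> (x = v \<and> y = w))"
proof -
  have irr: "\<not> lt z z" if "z \<in> A" for z using slin_irr[OF sl that] .
  have tr: "lt a b \<Longrightarrow> lt b c \<Longrightarrow> lt a c" if "a \<in> A" "b \<in> A" "c \<in> A" for a b c
    using slin_tri[OF sl that] by blast
  have asy: "lt a b \<Longrightarrow> \<not> lt b a" if "a \<in> A" "b \<in> A" for a b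
    using tr[OF that(1,2,1)] irr[OF that(1)] by blast
  note t1 = InvA_tri[OF inv mv mx my, rule_format]
  show ?thesis
    using cA[rule_format, OF mx] t1 xy vw asy[OF mx my] asy[OF mv mw] asy[OF mv mx] asy[OF mv my]
      asy[OF mx mw] asy[OF my mw] tr[OF mx my mw] tr[OF mv mx my] tr[OF mx mv my] tr[OF mx my mv]
      tr[OF mv my mw] tr[OF mw mx my] irr[OF mx] irr[OF my]
      slin_pair[OF sl mx mv] slin_pair[OF sl my mv] slin_pair[OF sl mx mw] slin_pair[OF sl my mw]
    unfolding cP_def by (auto simp: let_less_def)
qed

lemma cP_not_L: "cP lt Q v w z \<noteq> L"
  unfolding cP_def by auto

lemma cQ_cases:
  assumes sl: "slin A lt" and mv: "v \<in> A" and mw: "w \<in> A" and vw: "lt v w" and mx: "x \<in> A"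
  shows "(lt x v \<and> Q x v \<and> cQ lt Q v w x = X) \<or> (lt x v \<and> \<not> Q x v \<and> cQ lt Q v w x = L) \<or>
    (x = v \<and> cQ lt Q v w x = L) \<or> (lt v x \<and> lt x w \<and> cQ lt Q v w x = X) \<or> (x = w \<and> cQ lt Q v w x = R) \<or>
    (lt w x \<and> Q w x \<and> cQ lt Q v w x = X) \<or> (lt w x \<and> \<not> Q w x \<and> cQ lt Q v w x = R)"
  using slin_pair[OF sl mx mv] slin_pair[OF sl mx mw] slin_tri[OF sl mv mw mx] slin_tri[OF sl mx mv mw]
    slin_irr[OF sl mv] slin_irr[OF sl mw] vw
  unfolding cQ_def by auto

lemma prec_letters:
  assumes inv: "InvA A lt P Q" and sl: "slin A lt" and mv: "v \<in> A" and mw: "w \<in> A" and vw: "lt v w"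
    and un: "\<not> Q v w"
    and B1: "\<forall>u\<in>A. lt u v \<longrightarrow> P u w \<or> Q u v"
    and B2: "\<forall>u\<in>A. lt w u \<longrightarrow> P v u \<or> Q w u"
    and mx: "x \<in> A" and my: "y \<in> A" and xy: "lt x y"
  shows "(Q x y \<or> let_less (cQ lt Q v w y) (cQ lt Q v w x)) \<longleftrightarrow> Q x y"
    and "(P x y \<or> (\<not> Q x y \<and> cQ lt Q v w x = L \<and> cQ lt Q v w y = R)) \<longleftrightarrow> (P x y \<or> (x = v \<and> y = w))"
proof -
  have irr: "\<not> lt z z" if "z \<in> A" for z using slin_irr[OF sl that] .
  have tr: "lt a b \<Longrightarrow> lt b c \<Longrightarrow> lt a c" if "a \<in> A" "b \<in> A" "c \<in> A" for a b c
    using slin_tri[OF sl that] by blast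
  have asy: "lt a b \<Longrightarrow> \<not> lt b a" if "a \<in> A" "b \<in> A" for a b
    using tr[OF that(1,2,1)] irr[OF that(1)] by blast
  note t1 = InvA_tri[OF inv mx my mv, rule_format] InvA_tri[OF inv mw mx my, rule_format]
    InvA_tri[OF inv mx mw my, rule_format]
  note cx = cQ_cases[OF sl mv mw vw mx, where Q=Q] and cy = cQ_cases[OF sl mv mw vw my, where Q=Q]
  have A1: "Q x y" if "let_less (cQ lt Q v w y) (cQ lt Q v w x)"
  proof -
    have "(cQ lt Q v w x = X \<and> cQ lt Q v w y = L) \<or> (cQ lt Q v w x = R \<and> cQ lt Q v w y \<noteq> R)"
      using that by (cases "cQ lt Q v w x"; cases "cQ lt Q v w y") (auto simp: let_less_def)
    then show ?thesis
    proof
      assume h: "cQ lt Q v w x = X \<and> cQ lt Q v w y = L"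
      have y: "(lt y v \<and> \<not> Q y v) \<or> y = v" using cy h by auto
      then have "lt x v" using xy tr[OF mx my mv] by auto
      then have x: "lt x v \<and> Q x v" using cx h asy[OF mx mv] tr[OF mx mv mw] vw asy[OF mx mw] by auto
      show ?thesis using x y t1(1) xy by auto
    next
      assume h: "cQ lt Q v w x = R \<and> cQ lt Q v w y \<noteq> R"
      then have x: "x = w \<or> (lt w x \<and> \<not> Q w x)" using cx by auto
      then have "lt w y" using xy tr[OF mw mx my] by auto
      then have y: "Q w y" using cy h asy[OF mw my] asy[OF mv my] tr[OF mv mw my] vw by auto
      show ?thesis using x y t1(2) xy by auto
    qed
  qed
  show "(Q x y \<or> let_less (cQ lt Q v w y) (cQ lt Q v w x)) \<longleftrightarrow> Q x y" using A1 by blast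
  have A2: "P x y" if "\<not> Q x y" "cQ lt Q v w x = L" "cQ lt Q v w y = R" "\<not> (x = v \<and> y = w)"
  proof -
    have x: "(lt x v \<and> \<not> Q x v) \<or> x = v" using cx that by auto
    have y: "y = w \<or> (lt w y \<and> \<not> Q w y)" using cy that by auto
    have pxw: "P x w" if "lt x v" "\<not> Q x v" using B1[rule_format, OF mx] that by auto
    have pvy: "P v y" if "lt w y" "\<not> Q w y" using B2[rule_format, OF my] that by auto
    show ?thesis
    proof (cases "x = v")
      case True then show ?thesis using y that pvy by auto
    next
      case False
      then have xv: "lt x v" "\<not> Q x v" using x by auto
      show ?thesis
      proof (cases "y = w")
        case True then show ?thesis using pxw xv by auto
      next
        case False
        then have wy: "lt w y" "\<not> Q w y" using y by auto
        have "lt x w" using tr[OF mx mv mw] xv vw by auto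
        then show ?thesis using t1(3) pxw[OF xv] wy by auto
      qed
    qed
  qed
  have A3: "x = v \<and> y = w \<Longrightarrow> \<not> Q x y \<and> cQ lt Q v w x = L \<and> cQ lt Q v w y = R"
    using un irr[OF mv] irr[OF mw] asy[OF mv mw] vw unfolding cQ_def by auto
  show "(P x y \<or> (\<not> Q x y \<and> cQ lt Q v w x = L \<and> cQ lt Q v w y = R)) \<longleftrightarrow> (P x y \<or> (x = v \<and> y = w))"
    using A2 A3 by blast
qed


definition eqlen :: "word set \<Rightarrow> nat \<Rightarrow> bool" where
  "eqlen A n \<longleftrightarrow> (\<forall>a\<in>A. length a = n)"

lemma eqlen_level: "eqlen (level S i) i"
  unfolding eqlen_def level_def by auto

lemma slin_lex: "eqlen A n \<Longrightarrow> slin A lex_less"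
  unfolding slin_def eqlen_def
  using lex_less_trans lex_less_trich lex_less_def by (metis (full_types))

lemma lex_less_irr[simp]: "\<not> lex_less a a"
  unfolding lex_less_def by simp

lemma InvA_image:
  assumes "InvA A (\<lambda>x y. lt (f x) (f y)) (\<lambda>x y. P (f x) (f y)) (\<lambda>x y. Q (f x) (f y))"
  shows "InvA (f ` A) lt P Q"
proof (rule InvA_intro)
  fix a b assume "a \<in> f ` A" "b \<in> f ` A" "lt a b"
  then obtain a0 b0 where "a0 \<in> A" "b0 \<in> A" "a = f a0" "b = f b0" by auto
  then show "\<not> P b a" "\<not> (P a b \<and> Q a b)"
    using InvA_pair[OF assms, of a0 b0] \<open>lt a b\<close> by auto
next
  fix a b c assume "a \<in> f ` A" "b \<in> f ` A" "c \<in> f ` A" "lt a b" "lt b c"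
  then obtain a0 b0 c0 where m: "a0 \<in> A" "b0 \<in> A" "c0 \<in> A" "a = f a0" "b = f b0" "c = f c0" by auto
  note t = InvA_tri[OF assms m(1-3), rule_format]
  show "P a b \<Longrightarrow> P b c \<Longrightarrow> P a c" "\<not> Q a b \<Longrightarrow> Q a c \<Longrightarrow> Q b c" "P a b \<Longrightarrow> \<not> P a c \<Longrightarrow> Q b c"
    "\<not> P a b \<Longrightarrow> \<not> Q a b \<Longrightarrow> \<not> P a c \<Longrightarrow> \<not> Q a c \<Longrightarrow> \<not> P b c"
    using t m \<open>lt a b\<close> \<open>lt b c\<close> by auto
qed

lemma InvA_cong2:
  assumes inv: "InvA A lt P Q" and sl: "slin A lt"
   and lt: "\<And>x y. x\<in>A \<Longrightarrow> y\<in>A \<Longrightarrow> lt x y \<longleftrightarrow> lt' x y"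
   and r: "\<And>x y. x\<in>A \<Longrightarrow> y\<in>A \<Longrightarrow> lt x y \<Longrightarrow> (P x y \<longleftrightarrow> P' x y) \<and> (P y x \<longleftrightarrow> P' y x) \<and> (Q x y \<longleftrightarrow> Q' x y)"
  shows "InvA A lt' P' Q'"
proof (rule InvA_intro)
  fix a b assume ab: "a \<in> A" "b \<in> A" "lt' a b"
  then have "lt a b" using lt by auto
  then show "\<not> P' b a" "\<not> (P' a b \<and> Q' a b)" using InvA_pair[OF inv ab(1,2)] r[OF ab(1,2)] by auto
next
  fix a b c assume m: "a \<in> A" "b \<in> A" "c \<in> A" and o: "lt' a b" "lt' b c"
  then have o2: "lt a b" "lt b c" using lt by auto
  note t = InvA_tri[OF inv m, rule_format, OF o2]
  have ac: "lt a c" using slin_tri[OF sl m] o2 by auto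
  note r1 = r[OF m(1,2) o2(1)] r[OF m(2,3) o2(2)] r[OF m(1,3) ac]
  show "P' a b \<Longrightarrow> P' b c \<Longrightarrow> P' a c" "\<not> Q' a b \<Longrightarrow> Q' a c \<Longrightarrow> Q' b c" "P' a b \<Longrightarrow> \<not> P' a c \<Longrightarrow> Q' b c"
    "\<not> P' a b \<Longrightarrow> \<not> Q' a b \<Longrightarrow> \<not> P' a c \<Longrightarrow> \<not> Q' a c \<Longrightarrow> \<not> P' b c"
    using t r1 by auto
qed


lemma lts_level: "length a = length b \<Longrightarrow> lts a b \<longleftrightarrow> (lex_less a b \<or> (lex_less b a \<and> perp a b))"
  using lex_less_trich[of a b] lex_less_lts[of a b] lex_less_lts[of b a] perp_lts[of a b] lex_less_asym[of a b]
  by auto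

lemma snoc_rels:
  assumes len: "length a = length b" and ab: "lex_less a b" and np: "\<not> prec b a"
  shows "lex_less (a@[x]) (b@[y])" "\<not> lex_less (b@[y]) (a@[x])"
    "prec (a@[x]) (b@[y]) \<longleftrightarrow> prec a b \<or> (\<not> perp a b \<and> x = L \<and> y = R)"
    "\<not> prec (b@[y]) (a@[x])"
    "perp (a@[x]) (b@[y]) \<longleftrightarrow> perp a b \<or> let_less y x"
proof -
  have ne: "a \<noteq> b" using ab by auto
  have l1: "lts a b" using lex_less_lts[OF len ab] .
  have l2: "lts b a \<longleftrightarrow> perp a b" using perp_lts[OF len] l1 by auto
  show "lex_less (a@[x]) (b@[y])" using lex_less_snoc[OF len] ab by auto
  show "\<not> lex_less (b@[y]) (a@[x])" using lex_less_snoc[of b a] len lex_less_asym[OF len ab] ne by auto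
  show "prec (a@[x]) (b@[y]) \<longleftrightarrow> prec a b \<or> (\<not> perp a b \<and> x = L \<and> y = R)"
    using prec_snoc[OF len] l2 by auto
  show "\<not> prec (b@[y]) (a@[x])" using prec_snoc[of b a] len np l1 by auto
  show "perp (a@[x]) (b@[y]) \<longleftrightarrow> perp a b \<or> let_less y x"
    using perp_snoc[OF len] l1 l2 by auto
qed

lemma snoc_same: "\<not> prec (a@[x]) (a@[y]) \<or> (x = L \<and> y = R)" "\<not> perp (a@[x]) (a@[y])"
    "lex_less (a@[x]) (a@[y]) \<longleftrightarrow> let_less x y"
  using prec_snoc[of a a x y] perp_snoc[of a a x y] lex_less_snoc[of a a x y] let_less_asym by auto

abbreviation InvW :: "word set \<Rightarrow> bool" where
  "InvW A \<equiv> InvA A lex_less prec perp"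

lemma InvW_fimage:
  assumes el: "eqlen A n" and inv: "InvW A"
    and new: "InvA A lex_less (\<lambda>x y. lex_less x y \<and> (prec x y \<or> (\<not> perp x y \<and> c x = L \<and> c y = R)))
                 (\<lambda>x y. lex_less x y \<and> (perp x y \<or> let_less (c y) (c x)))"
  shows "InvW ((\<lambda>z. z@[c z]) ` A)"
proof (rule InvA_image, rule InvA_cong2[OF new slin_lex[OF el]])
  fix x y assume m: "x \<in> A" "y \<in> A"
  have len: "length x = length y" using el m unfolding eqlen_def by auto
  show "lex_less x y \<longleftrightarrow> lex_less (x@[c x]) (y@[c y])"
    using lex_less_snoc[OF len] by auto
  assume xy: "lex_less x y"
  have np: "\<not> prec y x" using InvA_pair[OF inv m] xy by auto
  note r = snoc_rels[OF len xy np, where x="c x" and y="c y"]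
  have "\<not> lex_less y x" using lex_less_asym[OF len xy] .
  then show "((lex_less x y \<and> (prec x y \<or> \<not> perp x y \<and> c x = L \<and> c y = R)) \<longleftrightarrow> prec (x@[c x]) (y@[c y])) \<and>
      ((lex_less y x \<and> (prec y x \<or> \<not> perp y x \<and> c y = L \<and> c x = R)) \<longleftrightarrow> prec (y@[c y]) (x@[c x])) \<and>
      ((lex_less x y \<and> (perp x y \<or> let_less (c y) (c x))) \<longleftrightarrow> perp (x@[c x]) (y@[c y]))"
    using r xy by auto
qed

lemma InvA_subset: "InvA A lt P Q \<Longrightarrow> B \<subseteq> A \<Longrightarrow> InvA B lt P Q"
  by (rule InvA_intro) (auto dest: InvA_pair InvA_tri)

lemma slin_subset: "slin A lt \<Longrightarrow> B \<subseteq> A \<Longrightarrow> slin B lt"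
  unfolding slin_def by (meson subsetD)


definition lt2 :: "('a\<Rightarrow>'a\<Rightarrow>bool) \<Rightarrow> 'a \<times> letter \<Rightarrow> 'a \<times> letter \<Rightarrow> bool" where
  "lt2 lt p q \<longleftrightarrow> lt (fst p) (fst q) \<or> (fst p = fst q \<and> let_less (snd p) (snd q))"

lemma slin_pairs: "slin A lt \<Longrightarrow> A2 \<subseteq> A \<times> UNIV \<Longrightarrow> slin A2 (lt2 lt)"
proof -
  assume sl: "slin A lt" and sub: "A2 \<subseteq> A \<times> UNIV"
  show ?thesis unfolding slin_def
  proof (intro conjI ballI impI)
    fix a assume "a \<in> A2" then show "\<not> lt2 lt a a" using slin_irr[OF sl] sub unfolding lt2_def by auto
  next
    fix a b assume m: "a \<in> A2" "b \<in> A2"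
    then have "fst a \<in> A" "fst b \<in> A" using sub by auto
    then have "lt (fst a) (fst b) \<or> fst a = fst b \<or> lt (fst b) (fst a)" using slin_pair[OF sl] by blast
    moreover have "snd a = snd b \<or> let_less (snd a) (snd b) \<or> let_less (snd b) (snd a)" using let_less_total by blast
    ultimately show "lt2 lt a b \<or> a = b \<or> lt2 lt b a" unfolding lt2_def by (auto simp: prod_eq_iff)
  next
    fix a b c assume m: "a \<in> A2" "b \<in> A2" "c \<in> A2" and ab: "lt2 lt a b" and bc: "lt2 lt b c"
    then have m2: "fst a \<in> A" "fst b \<in> A" "fst c \<in> A" using sub by auto
    have t: "lt (fst a) (fst b) \<Longrightarrow> lt (fst b) (fst c) \<Longrightarrow> lt (fst a) (fst c)" using slin_tri[OF sl m2] by blast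
    have lt3: "let_less x y \<Longrightarrow> let_less y z \<Longrightarrow> let_less x z" for x y z by (simp add: let_less_def)
    show "lt2 lt a c" using ab bc t lt3 unfolding lt2_def by auto
  qed
qed

lemma pairs_abs:
  assumes inv: "InvA A lt P Q" and sl: "slin A lt" and sub: "A2 \<subseteq> A \<times> UNIV"
  shows "InvA A2 (lt2 lt) (\<lambda>p q. lt (fst p) (fst q) \<and> P (fst p) (fst q)) (\<lambda>p q. lt (fst p) (fst q) \<and> Q (fst p) (fst q))"
proof (rule InvA_intro)
  fix a b assume m: "a \<in> A2" "b \<in> A2" and ab: "lt2 lt a b"
  have m2: "fst a \<in> A" "fst b \<in> A" using m sub by auto
  show "\<not> (lt (fst b) (fst a) \<and> P (fst b) (fst a))"
    using ab slin_tri[OF sl m2(1) m2(2) m2(1)] slin_irr[OF sl m2(1)] unfolding lt2_def by auto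
  show "\<not> ((lt (fst a) (fst b) \<and> P (fst a) (fst b)) \<and> lt (fst a) (fst b) \<and> Q (fst a) (fst b))"
    using InvA_pair[OF inv m2] by auto
next
  fix a b c assume m: "a \<in> A2" "b \<in> A2" "c \<in> A2" and ab: "lt2 lt a b" and bc: "lt2 lt b c"
  have m2: "fst a \<in> A" "fst b \<in> A" "fst c \<in> A" using m sub by auto
  note t = InvA_tri[OF inv m2, rule_format]
  have ab': "lt (fst a) (fst b) \<or> fst a = fst b" and bc': "lt (fst b) (fst c) \<or> fst b = fst c"
    using ab bc unfolding lt2_def by auto
  have tr: "lt (fst a) (fst c)" if "lt (fst a) (fst b)" "lt (fst b) (fst c)"
    using slin_tri[OF sl m2] that by auto
  have ir: "\<not> lt (fst a) (fst a)" "\<not> lt (fst b) (fst b)" using slin_irr[OF sl] m2 by auto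
  show "lt (fst a) (fst b) \<and> P (fst a) (fst b) \<Longrightarrow> lt (fst b) (fst c) \<and> P (fst b) (fst c) \<Longrightarrow> lt (fst a) (fst c) \<and> P (fst a) (fst c)"
    using t tr by auto
  show "\<not> (lt (fst a) (fst b) \<and> Q (fst a) (fst b)) \<Longrightarrow> lt (fst a) (fst c) \<and> Q (fst a) (fst c) \<Longrightarrow> lt (fst b) (fst c) \<and> Q (fst b) (fst c)"
    using t tr ab' bc' ir by auto
  show "lt (fst a) (fst b) \<and> P (fst a) (fst b) \<Longrightarrow> \<not> (lt (fst a) (fst c) \<and> P (fst a) (fst c)) \<Longrightarrow> lt (fst b) (fst c) \<and> Q (fst b) (fst c)"
    using t tr ab' bc' ir by auto
  show "\<not> (lt (fst a) (fst b) \<and> P (fst a) (fst b)) \<Longrightarrow> \<not> (lt (fst a) (fst b) \<and> Q (fst a) (fst b)) \<Longrightarrow>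
    \<not> (lt (fst a) (fst c) \<and> P (fst a) (fst c)) \<Longrightarrow> \<not> (lt (fst a) (fst c) \<and> Q (fst a) (fst c)) \<Longrightarrow> \<not> (lt (fst b) (fst c) \<and> P (fst b) (fst c))"
    using t tr ab' bc' ir by auto
qed

lemma InvW_pimage:
  assumes el: "eqlen A n" and inv: "InvW A" and sub: "A2 \<subseteq> A \<times> UNIV"
    and noL: "\<forall>p\<in>A2. snd p \<noteq> L"
    and mono: "\<forall>p\<in>A2. \<forall>q\<in>A2. lex_less (fst p) (fst q) \<longrightarrow> \<not> let_less (snd q) (snd p)"
  shows "InvW ((\<lambda>p. fst p @ [snd p]) ` A2)"
proof (rule InvA_image, rule InvA_cong2[OF pairs_abs[OF inv slin_lex[OF el] sub] slin_pairs[OF slin_lex[OF el] sub]])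
  fix p q assume m: "p \<in> A2" "q \<in> A2"
  have m2: "fst p \<in> A" "fst q \<in> A" using m sub by auto
  have len: "length (fst p) = length (fst q)" using el m2 unfolding eqlen_def by auto
  show "lt2 lex_less p q \<longleftrightarrow> lex_less (fst p @ [snd p]) (fst q @ [snd q])"
    using lex_less_snoc[OF len] unfolding lt2_def by auto
  assume pq: "lt2 lex_less p q"
  show "((lex_less (fst p) (fst q) \<and> prec (fst p) (fst q)) \<longleftrightarrow> prec (fst p @ [snd p]) (fst q @ [snd q])) \<and>
         ((lex_less (fst q) (fst p) \<and> prec (fst q) (fst p)) \<longleftrightarrow> prec (fst q @ [snd q]) (fst p @ [snd p])) \<and>
         ((lex_less (fst p) (fst q) \<and> perp (fst p) (fst q)) \<longleftrightarrow> perp (fst p @ [snd p]) (fst q @ [snd q]))"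
  proof (cases "fst p = fst q")
    case True
    then show ?thesis using snoc_same[of "fst p" "snd p" "snd q"] snoc_same[of "fst p" "snd q" "snd p"] noL m
      by auto
  next
    case False
    then have xy: "lex_less (fst p) (fst q)" using pq unfolding lt2_def by auto
    have np: "\<not> prec (fst q) (fst p)" using InvA_pair[OF inv m2] xy by auto
    note r = snoc_rels[OF len xy np, where x="snd p" and y="snd q"]
    show ?thesis using r xy lex_less_asym[OF len xy] noL m mono by auto
  qed
qed


lemma eqlen_len: "eqlen A n \<Longrightarrow> a \<in> A \<Longrightarrow> length a = n"
  unfolding eqlen_def by auto

lemma perp_eq:
  assumes el: "eqlen A n" and mv: "v \<in> A" and mw: "w \<in> A" and vw: "lex_less v w"
  shows "app {z\<in>A. lex_less z v} X \<union> {v @ [R]} \<union> app {z\<in>A. lex_less v z \<and> lex_less z w \<and> perp z v} X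
     \<union> app {z\<in>A. lex_less v z \<and> lex_less z w \<and> \<not> perp z v} R \<union> {w @ [X]} \<union> app {z\<in>A. lex_less w z} R
     = (\<lambda>z. z@[cP lex_less perp v w z]) ` A" (is "?L = ?R")
proof
  have ln: "length z = n" if "z \<in> A" for z using el that by (rule eqlen_len)
  have vw': "\<not> lex_less w v" "v \<noteq> w" using lex_less_asym[of v w] ln mv mw vw by auto
  show "?L \<subseteq> ?R"
  proof
    fix x assume "x \<in> ?L"
    then consider (a) z where "z \<in> A" "lex_less z v" "x = z@[X]" | (b) "x = v@[R]"
      | (c) z where "z \<in> A" "lex_less v z" "lex_less z w" "perp z v" "x = z@[X]"
      | (d) z where "z \<in> A" "lex_less v z" "lex_less z w" "\<not> perp z v" "x = z@[R]"
      | (e) "x = w@[X]" | (f) z where "z \<in> A" "lex_less w z" "x = z@[R]"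
      unfolding app_def by blast
    then show "x \<in> ?R"
    proof cases
      case (a z) then show ?thesis unfolding cP_def by (intro image_eqI[of _ _ z]) auto
    next
      case b then show ?thesis using mv unfolding cP_def by (intro image_eqI[of _ _ v]) auto
    next
      case (c z)
      then have "\<not> lex_less z v" "z \<noteq> v" using lex_less_asym[of v z] ln mv by auto
      then show ?thesis using c perp_sym[of z v] unfolding cP_def by (intro image_eqI[of _ _ z]) auto
    next
      case (d z)
      then have "\<not> lex_less z v" "z \<noteq> v" using lex_less_asym[of v z] ln mv by auto
      then show ?thesis using d perp_sym[of z v] unfolding cP_def by (intro image_eqI[of _ _ z]) auto
    next
      case e then show ?thesis using mw vw' unfolding cP_def by (intro image_eqI[of _ _ w]) auto
    next
      case (f z)
      then have "\<not> lex_less z v" "z \<noteq> v" "\<not> lex_less z w" "z \<noteq> w"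
        using lex_less_asym[of w z] lex_less_trans[of v w z] lex_less_asym[of v z] ln mv mw vw by auto
      then show ?thesis using f unfolding cP_def by (intro image_eqI[of _ _ z]) auto
    qed
  qed
  show "?R \<subseteq> ?L"
  proof
    fix x assume "x \<in> ?R"
    then obtain z where z: "z \<in> A" "x = z@[cP lex_less perp v w z]" by auto
    have t1: "lex_less z v \<or> z = v \<or> lex_less v z" using lex_less_trich[of z v] ln z mv by auto
    have t2: "lex_less z w \<or> z = w \<or> lex_less w z" using lex_less_trich[of z w] ln z mw by auto
    show "x \<in> ?L" using t1 t2 z perp_sym[of z v] vw' unfolding cP_def app_def by auto
  qed
qed

lemma prec_eq:
  assumes el: "eqlen A n" and mv: "v \<in> A" and mw: "w \<in> A" and vw: "lex_less v w"
  shows "app {z\<in>A. lex_less z v \<and> perp z v} X \<union> app {z\<in>A. lex_less z v \<and> \<not> perp z v} L \<union> {v @ [L]}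
         \<union> app {z\<in>A. lex_less v z \<and> lex_less z w} X \<union> {w @ [R]}
         \<union> app {z\<in>A. lex_less w z \<and> perp w z} X
         \<union> app {z\<in>A. lex_less w z \<and> \<not> perp w z} R
     = (\<lambda>z. z@[cQ lex_less perp v w z]) ` A" (is "?L = ?R")
proof
  have ln: "length z = n" if "z \<in> A" for z using el that by (rule eqlen_len)
  have vw': "\<not> lex_less w v" "v \<noteq> w" using lex_less_asym[of v w] ln mv mw vw by auto
  show "?L \<subseteq> ?R"
  proof
    fix x assume "x \<in> ?L"
    then consider (a) z where "z \<in> A" "lex_less z v" "perp z v" "x = z@[X]"
      | (a2) z where "z \<in> A" "lex_less z v" "\<not> perp z v" "x = z@[L]" | (b) "x = v@[L]"
      | (c) z where "z \<in> A" "lex_less v z" "lex_less z w" "x = z@[X]"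
      | (e) "x = w@[R]" | (f) z where "z \<in> A" "lex_less w z" "perp w z" "x = z@[X]"
      | (f2) z where "z \<in> A" "lex_less w z" "\<not> perp w z" "x = z@[R]"
      unfolding app_def by blast
    then show "x \<in> ?R"
    proof cases
      case (a z) then show ?thesis unfolding cQ_def by (intro image_eqI[of _ _ z]) auto
    next
      case (a2 z) then show ?thesis unfolding cQ_def by (intro image_eqI[of _ _ z]) auto
    next
      case b then show ?thesis using mv unfolding cQ_def by (intro image_eqI[of _ _ v]) auto
    next
      case (c z)
      then have "\<not> lex_less z v" "z \<noteq> v" using lex_less_asym[of v z] ln mv by auto
      then show ?thesis using c unfolding cQ_def by (intro image_eqI[of _ _ z]) auto
    next
      case e then show ?thesis using mw vw' unfolding cQ_def by (intro image_eqI[of _ _ w]) auto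
    next
      case (f z)
      then have "\<not> lex_less z v" "z \<noteq> v" "\<not> lex_less z w" "z \<noteq> w"
        using lex_less_asym[of w z] lex_less_trans[of v w z] lex_less_asym[of v z] ln mv mw vw by auto
      then show ?thesis using f unfolding cQ_def by (intro image_eqI[of _ _ z]) auto
    next
      case (f2 z)
      then have "\<not> lex_less z v" "z \<noteq> v" "\<not> lex_less z w" "z \<noteq> w"
        using lex_less_asym[of w z] lex_less_trans[of v w z] lex_less_asym[of v z] ln mv mw vw by auto
      then show ?thesis using f2 unfolding cQ_def by (intro image_eqI[of _ _ z]) auto
    qed
  qed
  show "?R \<subseteq> ?L"
  proof
    fix x assume "x \<in> ?R"
    then obtain z where z: "z \<in> A" "x = z@[cQ lex_less perp v w z]" by auto
    have t1: "lex_less z v \<or> z = v \<or> lex_less v z" using lex_less_trich[of z v] ln z mv by auto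
    have t2: "lex_less z w \<or> z = w \<or> lex_less w z" using lex_less_trich[of z w] ln z mw by auto
    show "x \<in> ?L" using t1 t2 z vw' unfolding cQ_def app_def by auto
  qed
qed

definition cB :: "word \<Rightarrow> word \<Rightarrow> letter" where
  "cB w z = (if lex_less z w then X else R)"

lemma branch_eq:
  assumes el: "eqlen A n" and mw: "w \<in> A"
  shows "app {z\<in>A. lex_less z w} X \<union> {w @ [X], w @ [R]} \<union> app {z\<in>A. lex_less w z} R
     = (\<lambda>p. fst p @ [snd p]) ` ((\<lambda>z. (z, cB w z)) ` A \<union> {(w, X)})" (is "?L = ?R")
proof
  have ln: "length z = n" if "z \<in> A" for z using el that by (rule eqlen_len)
  show "?L \<subseteq> ?R"
  proof
    fix x assume "x \<in> ?L"
    then consider (a) z where "z \<in> A" "lex_less z w" "x = z@[X]" | (b) "x = w@[X]" | (c) "x = w@[R]"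
      | (d) z where "z \<in> A" "lex_less w z" "x = z@[R]"
      unfolding app_def by blast
    then show "x \<in> ?R"
    proof cases
      case (a z) then show ?thesis unfolding cB_def by (intro image_eqI[of _ _ "(z, X)"]) auto
    next
      case b then show ?thesis by (intro image_eqI[of _ _ "(w, X)"]) auto
    next
      case c then show ?thesis using mw unfolding cB_def by (intro image_eqI[of _ _ "(w, R)"]) auto
    next
      case (d z) then have "\<not> lex_less z w" using lex_less_asym[of w z] ln mw by auto
      then show ?thesis using d unfolding cB_def by (intro image_eqI[of _ _ "(z, R)"]) auto
    qed
  qed
  show "?R \<subseteq> ?L"
  proof
    fix x assume "x \<in> ?R"
    then obtain p where p: "p \<in> (\<lambda>z. (z, cB w z)) ` A \<union> {(w, X)}" "x = fst p @ [snd p]" by blast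
    then consider (a) z where "z \<in> A" "x = z @ [cB w z]" | (b) "x = w @ [X]" by auto
    then show "x \<in> ?L"
    proof cases
      case (a z)
      have t2: "lex_less z w \<or> z = w \<or> lex_less w z" using lex_less_trich[of z w] ln mw a by auto
      then show ?thesis using a unfolding cB_def app_def by auto
    next
      case b then show ?thesis by auto
    qed
  qed
qed


lemma step_cases:
  assumes "poset_type S" "\<exists>w\<in>S. i < length w"
  shows "leaf_step S i \<or> branch_step S i \<or> perp_step S i \<or> prec_step S i"
proof -
  have "length (filter id [leaf_step S i, branch_step S i, perp_step S i, prec_step S i]) = 1"
    using assms unfolding poset_type_def by blast
  then show ?thesis by (auto split: if_splits)
qed

lemma level_empty: "\<not> (\<exists>w\<in>S. i < length w) \<Longrightarrow> level S (Suc i) = {}"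
  unfolding level_def by auto

lemma unrelated_D: "unrelated v w \<Longrightarrow> \<not> prec v w \<and> \<not> perp v w \<and> \<not> prec w v"
  unfolding unrelated_def related_def preceq_def by auto

lemma InvW_leaf:
  assumes el: "eqlen A n" and inv: "InvW A"
  shows "InvW (app (A - {w}) X)"
proof -
  have el2: "eqlen (A - {w}) n" using el unfolding eqlen_def by auto
  have i2: "InvW (A - {w})" using InvA_subset[OF inv] by auto
  have "InvW ((\<lambda>z. z@[X]) ` (A - {w}))"
  proof (rule InvW_fimage[OF el2 i2], rule InvA_cong2[OF i2 slin_lex[OF el2]])
    fix x y assume m: "x \<in> A - {w}" "y \<in> A - {w}"
    show "lex_less x y = lex_less x y" ..
    assume xy: "lex_less x y"
    have "\<not> prec y x" using InvA_pair[OF i2 m] xy by auto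
    moreover have "\<not> lex_less y x" using lex_less_asym[of x y] xy m el2 unfolding eqlen_def by auto
    ultimately show "(prec x y \<longleftrightarrow> lex_less x y \<and> (prec x y \<or> \<not> perp x y \<and> X = L \<and> X = R)) \<and>
      (prec y x \<longleftrightarrow> lex_less y x \<and> (prec y x \<or> \<not> perp y x \<and> X = L \<and> X = R)) \<and>
      (perp x y \<longleftrightarrow> lex_less x y \<and> (perp x y \<or> let_less X X))" using xy by auto
  qed
  then show ?thesis unfolding app_def by simp
qed

lemma InvW_branch:
  assumes el: "eqlen A n" and inv: "InvW A" and mw: "w \<in> A"
  shows "InvW ((\<lambda>p. fst p @ [snd p]) ` ((\<lambda>z. (z, cB w z)) ` A \<union> {(w, X)}))"
proof (rule InvW_pimage[OF el inv])
  have ln: "length z = n" if "z \<in> A" for z using el that by (rule eqlen_len)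
  show "(\<lambda>z. (z, cB w z)) ` A \<union> {(w, X)} \<subseteq> A \<times> UNIV" using mw by auto
  show "\<forall>p\<in>(\<lambda>z. (z, cB w z)) ` A \<union> {(w, X)}. snd p \<noteq> L" unfolding cB_def by auto
  show "\<forall>p\<in>(\<lambda>z. (z, cB w z)) ` A \<union> {(w, X)}. \<forall>q\<in>(\<lambda>z. (z, cB w z)) ` A \<union> {(w, X)}.
          lex_less (fst p) (fst q) \<longrightarrow> \<not> let_less (snd q) (snd p)"
  proof (intro ballI impI)
    fix p q assume p: "p \<in> (\<lambda>z. (z, cB w z)) ` A \<union> {(w, X)}" and q: "q \<in> (\<lambda>z. (z, cB w z)) ` A \<union> {(w, X)}"
      and pq: "lex_less (fst p) (fst q)"
    have mp: "fst p \<in> A" "fst q \<in> A" using p q mw by auto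
    have nR: "snd p = R \<Longrightarrow> \<not> lex_less (fst p) w" using p unfolding cB_def by auto
    have qR: "\<not> lex_less (fst q) w \<Longrightarrow> fst q \<noteq> w \<Longrightarrow> snd q = R" using q unfolding cB_def by auto
    have "snd q \<noteq> L" using q unfolding cB_def by (auto split: if_splits)
    moreover have "snd p = R \<Longrightarrow> snd q = R"
    proof -
      assume "snd p = R"
      then have "\<not> lex_less (fst p) w" using nR by auto
      then have "fst p = w \<or> lex_less w (fst p)" using lex_less_trich[of "fst p" w] ln mp mw by auto
      then have "lex_less w (fst q)" using pq lex_less_trans[of w "fst p" "fst q"] ln mp mw by auto
      then show "snd q = R" using qR lex_less_asym[of w "fst q"] ln mp mw by auto
    qed
    ultimately show "\<not> let_less (snd q) (snd p)"
      by (cases "snd p"; cases "snd q") (auto simp: let_less_def)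
  qed
qed

lemma InvW_perp:
  assumes el: "eqlen A n" and inv: "InvW A" and mv: "v \<in> A" and mw: "w \<in> A" and vw: "lex_less v w"
    and un: "unrelated v w" and cA: "\<forall>u\<in>A. lex_less v u \<and> lex_less u w \<longrightarrow> perp u v \<or> perp u w"
  shows "InvW ((\<lambda>z. z@[cP lex_less perp v w z]) ` A)"
proof (rule InvW_fimage[OF el inv])
  have sl: "slin A lex_less" using slin_lex[OF el] .
  have cA': "\<forall>u\<in>A. lex_less v u \<and> lex_less u w \<longrightarrow> perp v u \<or> perp u w" using cA perp_sym by blast
  have un': "\<not> prec v w" "\<not> perp v w" using unrelated_D[OF un] by auto
  note pa = perp_abs[OF inv sl mv mw vw un' cA']
  show "InvA A lex_less (\<lambda>x y. lex_less x y \<and> (prec x y \<or> \<not> perp x y \<and> cP lex_less perp v w x = L \<and> cP lex_less perp v w y = R))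
     (\<lambda>x y. lex_less x y \<and> (perp x y \<or> let_less (cP lex_less perp v w y) (cP lex_less perp v w x)))"
  proof (rule InvA_cong2[OF pa sl])
    fix x y assume m: "x \<in> A" "y \<in> A"
    show "lex_less x y = lex_less x y" ..
    assume xy: "lex_less x y"
    have "\<not> lex_less y x" using lex_less_asym[of x y] xy m el unfolding eqlen_def by auto
    then show "((lex_less x y \<and> prec x y) \<longleftrightarrow> (lex_less x y \<and> (prec x y \<or> \<not> perp x y \<and> cP lex_less perp v w x = L \<and> cP lex_less perp v w y = R))) \<and>
       ((lex_less y x \<and> prec y x) \<longleftrightarrow> (lex_less y x \<and> (prec y x \<or> \<not> perp y x \<and> cP lex_less perp v w y = L \<and> cP lex_less perp v w x = R))) \<and>
       ((lex_less x y \<and> (perp x y \<or> x = v \<and> y = w)) \<longleftrightarrow> (lex_less x y \<and> (perp x y \<or> let_less (cP lex_less perp v w y) (cP lex_less perp v w x))))"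
      using perp_letters[OF inv sl mv mw vw cA' m xy] cP_not_L[of lex_less perp v w x] xy by auto
  qed
qed

lemma InvW_prec:
  assumes el: "eqlen A n" and inv: "InvW A" and mv: "v \<in> A" and mw: "w \<in> A" and vw: "lex_less v w"
    and un: "unrelated v w"
    and B1: "\<forall>u\<in>A. lex_less u v \<longrightarrow> preceq u w \<or> perp u v"
    and B2: "\<forall>u\<in>A. lex_less w u \<longrightarrow> preceq v u \<or> perp w u"
  shows "InvW ((\<lambda>z. z@[cQ lex_less perp v w z]) ` A)"
proof (rule InvW_fimage[OF el inv])
  have sl: "slin A lex_less" using slin_lex[OF el] .
  have ln: "length z = n" if "z \<in> A" for z using el that by (rule eqlen_len)
  have B1': "\<forall>u\<in>A. lex_less u v \<longrightarrow> prec u w \<or> perp u v"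
  proof (intro ballI impI)
    fix u assume "u \<in> A" "lex_less u v"
    then have "u \<noteq> w" using lex_less_asym[of v w] lex_less_trans[of u v w] ln mv mw vw by auto
    then show "prec u w \<or> perp u v" using B1 \<open>u \<in> A\<close> \<open>lex_less u v\<close> unfolding preceq_def by auto
  qed
  have B2': "\<forall>u\<in>A. lex_less w u \<longrightarrow> prec v u \<or> perp w u"
  proof (intro ballI impI)
    fix u assume "u \<in> A" "lex_less w u"
    then have "u \<noteq> v" using lex_less_asym[of v w] lex_less_trans[of v w u] ln mv mw vw by auto
    then show "prec v u \<or> perp w u" using B2 \<open>u \<in> A\<close> \<open>lex_less w u\<close> unfolding preceq_def by auto
  qed
  have un': "\<not> prec v w" "\<not> perp v w" using unrelated_D[OF un] by auto
  note pa = prec_abs[OF inv sl mv mw vw un' B1' B2']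
  show "InvA A lex_less (\<lambda>x y. lex_less x y \<and> (prec x y \<or> \<not> perp x y \<and> cQ lex_less perp v w x = L \<and> cQ lex_less perp v w y = R))
     (\<lambda>x y. lex_less x y \<and> (perp x y \<or> let_less (cQ lex_less perp v w y) (cQ lex_less perp v w x)))"
  proof (rule InvA_cong2[OF pa sl])
    fix x y assume m: "x \<in> A" "y \<in> A"
    show "lex_less x y = lex_less x y" ..
    assume xy: "lex_less x y"
    have "\<not> lex_less y x" using lex_less_asym[of x y] xy m ln by auto
    then show "((lex_less x y \<and> (prec x y \<or> x = v \<and> y = w)) \<longleftrightarrow> (lex_less x y \<and> (prec x y \<or> \<not> perp x y \<and> cQ lex_less perp v w x = L \<and> cQ lex_less perp v w y = R))) \<and>
       ((lex_less y x \<and> (prec y x \<or> y = v \<and> x = w)) \<longleftrightarrow> (lex_less y x \<and> (prec y x \<or> \<not> perp y x \<and> cQ lex_less perp v w y = L \<and> cQ lex_less perp v w x = R))) \<and>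
       ((lex_less x y \<and> perp x y) \<longleftrightarrow> (lex_less x y \<and> (perp x y \<or> let_less (cQ lex_less perp v w y) (cQ lex_less perp v w x))))"
      using prec_letters[OF inv sl mv mw vw un'(2) B1' B2' m xy] xy by auto
  qed
qed

lemma inv_level:
  assumes pt: "poset_type S"
  shows "InvW (level S i)"
proof (induction i)
  case 0
  have h: "a \<in> level S 0 \<Longrightarrow> a = []" for a unfolding level_def by auto
  show ?case by (intro InvA_intro) (metis h lex_less_irr)+
next
  case (Suc i)
  note el = eqlen_level[of S i]
  show ?case
  proof (cases "\<exists>w\<in>S. i < length w")
    case False then show ?thesis using level_empty[OF False] by (intro InvA_intro) auto
  next
    case True
    then consider "leaf_step S i" | "branch_step S i" | "perp_step S i" | "prec_step S i"
      using step_cases[OF pt] by blast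
    then show ?thesis
    proof cases
      case 1 then obtain w where "level S (Suc i) = app (level S i - {w}) X"
        unfolding leaf_step_def by blast
      then show ?thesis using InvW_leaf[OF el Suc.IH] by simp
    next
      case 2 then obtain w where w: "w \<in> level S i" and eq: "level S (Suc i) = app {z \<in> level S i. lex_less z w} X \<union> {w @ [X], w @ [R]}
                        \<union> app {z \<in> level S i. lex_less w z} R" unfolding branch_step_def by blast
      show ?thesis unfolding eq branch_eq[OF el w] using InvW_branch[OF el Suc.IH w] .
    next
      case 3 then obtain v w where vw: "v \<in> level S i" "w \<in> level S i" "unrelated v w" "lex_less v w"
        and eq: "level S (Suc i) = app {z \<in> level S i. lex_less z v} X \<union> {v @ [R]}
         \<union> app {z \<in> level S i. lex_less v z \<and> lex_less z w \<and> perp z v} X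
         \<union> app {z \<in> level S i. lex_less v z \<and> lex_less z w \<and> \<not> perp z v} R
         \<union> {w @ [X]} \<union> app {z \<in> level S i. lex_less w z} R"
        and cA: "\<forall>u \<in> level S i. lex_less v u \<and> lex_less u w \<longrightarrow> perp u v \<or> perp u w"
        unfolding perp_step_def by blast
      show ?thesis unfolding eq perp_eq[OF el vw(1,2,4)] using InvW_perp[OF el Suc.IH vw(1,2,4,3) cA] .
    next
      case 4 then obtain v w where vw: "v \<in> level S i" "w \<in> level S i" "unrelated v w" "lex_less v w"
        and eq: "level S (Suc i) = app {z \<in> level S i. lex_less z v \<and> perp z v} X
         \<union> app {z \<in> level S i. lex_less z v \<and> \<not> perp z v} L \<union> {v @ [L]}
         \<union> app {z \<in> level S i. lex_less v z \<and> lex_less z w} X \<union> {w @ [R]}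
         \<union> app {z \<in> level S i. lex_less w z \<and> perp w z} X
         \<union> app {z \<in> level S i. lex_less w z \<and> \<not> perp w z} R"
        and B1: "\<forall>u \<in> level S i. lex_less u v \<longrightarrow> preceq u w \<or> perp u v"
        and B2: "\<forall>u \<in> level S i. lex_less w u \<longrightarrow> preceq v u \<or> perp w u"
        unfolding prec_step_def by blast
      show ?thesis unfolding eq prec_eq[OF el vw(1,2,4)] using InvW_prec[OF el Suc.IH vw(1,2,4,3) B1 B2] .
    qed
  qed
qed


lemma closure_take: "w \<in> closure A \<Longrightarrow> i \<le> length w \<Longrightarrow> take i w \<in> closure A"
proof -
  assume "w \<in> closure A" "i \<le> length w"
  then obtain s k where s: "s \<in> A" "k \<le> length s" "w = take k s" unfolding closure_def by auto
  then have "i \<le> k" using \<open>i \<le> length w\<close> by simp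
  then have "take i w = take i s" "i \<le> length s" using s by (auto simp: min_def)
  then show ?thesis using s unfolding closure_def by blast
qed

lemma closure_sub: "A \<subseteq> closure A"
  unfolding closure_def by force

lemma closure_idem: "closure (closure A) = closure A"
proof
  show "closure (closure A) \<subseteq> closure A"
  proof
    fix x assume "x \<in> closure (closure A)"
    then obtain s i where "s \<in> closure A" "i \<le> length s" "x = take i s" unfolding closure_def[of "closure A"] by blast
    then show "x \<in> closure A" using closure_take by blast
  qed
  show "closure A \<subseteq> closure (closure A)" by (rule closure_sub)
qed

lemma closure_mono: "A \<subseteq> B \<Longrightarrow> closure A \<subseteq> closure B"
  unfolding closure_def by blast

lemma leaves_sub: "leaves S \<subseteq> S" unfolding leaves_def by auto

lemma leaf_noext: "z \<in> leaves S \<Longrightarrow> z @ [c] \<notin> S"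
  unfolding leaves_def by auto

lemma closure_child: "z \<in> closure A \<Longrightarrow> z \<notin> A \<Longrightarrow> \<exists>c. z @ [c] \<in> closure A"
proof -
  assume "z \<in> closure A" "z \<notin> A"
  then obtain s i where s: "s \<in> A" "i \<le> length s" "z = take i s" unfolding closure_def by auto
  then have "i < length s" using \<open>z \<notin> A\<close> by (cases "i = length s") auto
  then have "z @ [s ! i] = take (Suc i) s" using s by (simp add: take_Suc_conv_app_nth)
  moreover have "take (Suc i) s \<in> closure A" using s \<open>i < length s\<close> unfolding closure_def by force
  ultimately show ?thesis by metis
qed

lemma level_Suc_closed: "x \<in> level C (Suc j) \<Longrightarrow> closure C = C \<Longrightarrow> \<exists>z c. x = z @ [c] \<and> z \<in> level C j"
proof -
  assume x: "x \<in> level C (Suc j)" and cl: "closure C = C"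
  then have "length x = Suc j" "x \<in> C" unfolding level_def by auto
  then obtain z c where "x = z @ [c]" by (cases x rule: rev_exhaust) auto
  moreover have "take j x \<in> C" using closure_take[of x C j] cl \<open>x \<in> C\<close> \<open>length x = Suc j\<close> by auto
  ultimately show ?thesis using \<open>length x = Suc j\<close> unfolding level_def by auto
qed

lemma in_level_snoc: "z @ [c] \<in> level C (Suc j) \<longleftrightarrow> z @ [c] \<in> C \<and> length z = j"
  unfolding level_def by auto

lemma snoc_eq_iff: "z @ [c] = z' @ [c'] \<longleftrightarrow> z = z' \<and> c = c'" by auto

lemma cQ_noRL:
  assumes sl: "slin A lt" and mv: "v \<in> A" and mw: "w \<in> A" and vw: "lt v w"
    and mx: "x \<in> A" and my: "y \<in> A" and xy: "lt x y"
  shows "\<not> (cQ lt Q v w x = R \<and> cQ lt Q v w y = L)"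
proof
  assume h: "cQ lt Q v w x = R \<and> cQ lt Q v w y = L"
  have x: "x = w \<or> lt w x" using h cQ_cases[OF sl mv mw vw mx, of Q] by auto
  have y: "y = v \<or> lt y v" using h cQ_cases[OF sl mv mw vw my, of Q] by auto
  have "lt w y" using x xy slin_tri[OF sl mw mx my] by auto
  then have "lt w v" using y slin_tri[OF sl mw my mv] by auto
  then show False using vw slin_tri[OF sl mv mw mv] slin_irr[OF sl mv] by auto
qed

lemma prec_letters3:
  assumes inv: "InvA A lt P Q" and sl: "slin A lt" and mv: "v \<in> A" and mw: "w \<in> A" and vw: "lt v w"
    and B1: "\<forall>u\<in>A. lt u v \<longrightarrow> P u w \<or> Q u v"
    and B2: "\<forall>u\<in>A. lt w u \<longrightarrow> P v u \<or> Q w u"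
    and mx: "x \<in> A" and my: "y \<in> A" and xy: "lt x y"
    and L: "cQ lt Q v w x = L" and R: "cQ lt Q v w y = R" and nvw: "\<not> (x = v \<and> y = w)"
  shows "P x y \<and> \<not> Q x y"
proof -
  note cx = cQ_cases[OF sl mv mw vw mx, where Q=Q] and cy = cQ_cases[OF sl mv mw vw my, where Q=Q]
  have x: "(lt x v \<and> \<not> Q x v) \<or> x = v" using cx L by auto
  have y: "y = w \<or> (lt w y \<and> \<not> Q w y)" using cy R by auto
  have pxw: "P x w" if "lt x v" "\<not> Q x v" using B1[rule_format, OF mx] that by auto
  have pvy: "P v y" if "lt w y" "\<not> Q w y" using B2[rule_format, OF my] that by auto
  have "P x y"
  proof (cases "x = v")
    case True then show ?thesis using y nvw pvy by auto
  next
    case False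
    then have xv: "lt x v" "\<not> Q x v" using x by auto
    show ?thesis
    proof (cases "y = w")
      case True then show ?thesis using pxw xv by auto
    next
      case False
      then have wy: "lt w y" "\<not> Q w y" using y by auto
      have "lt x w" using slin_tri[OF sl mx mv mw] xv vw by auto
      then show ?thesis using InvA_tri[OF inv mx mw my, rule_format] pxw[OF xv] wy by auto
    qed
  qed
  then show ?thesis using InvA_pair[OF inv mx my] xy by auto
qed

definition relok :: "word set \<Rightarrow> (word \<Rightarrow> letter) \<Rightarrow> bool" where
  "relok A c \<longleftrightarrow> (\<forall>x\<in>A. \<forall>y\<in>A. lex_less x y \<longrightarrow> \<not> (c x = R \<and> c y = L) \<and>
      (let_less (c y) (c x) \<longrightarrow> perp x y) \<and> (c x = L \<and> c y = R \<longrightarrow> prec x y \<and> \<not> perp x y))"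

lemma relok_mono:
  assumes "\<forall>x\<in>A. c x \<noteq> L" and "\<forall>x\<in>A. \<forall>y\<in>A. lex_less x y \<longrightarrow> c y = X \<longrightarrow> c x = X"
  shows "relok A c"
  unfolding relok_def
proof (intro ballI impI)
  fix x y assume m: "x \<in> A" "y \<in> A" and xy: "lex_less x y"
  have "c x \<noteq> L" "c y \<noteq> L" using assms(1) m by auto
  moreover have "c y = X \<Longrightarrow> c x = X" using assms(2) m xy by auto
  ultimately show "\<not> (c x = R \<and> c y = L) \<and> (let_less (c y) (c x) \<longrightarrow> perp x y) \<and> (c x = L \<and> c y = R \<longrightarrow> prec x y \<and> \<not> perp x y)"
    by (cases "c x"; cases "c y") (auto simp: let_less_def)
qed

lemma relok_cB:
  assumes el: "eqlen A n" and mw: "w \<in> S0" and el2: "eqlen S0 n" and sub: "A \<subseteq> S0"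
  shows "relok A (cB w)" "relok A (\<lambda>z. if z = w then X else cB w z)"
proof -
  have ln: "length z = n" if "z \<in> S0" for z using el2 that by (rule eqlen_len)
  show "relok A (cB w)"
  proof (rule relok_mono)
    show "\<forall>x\<in>A. cB w x \<noteq> L" unfolding cB_def by auto
    show "\<forall>x\<in>A. \<forall>y\<in>A. lex_less x y \<longrightarrow> cB w y = X \<longrightarrow> cB w x = X"
      unfolding cB_def using lex_less_trans[of _ _ w] ln sub mw by (auto split: if_splits)
  qed
  show "relok A (\<lambda>z. if z = w then X else cB w z)"
  proof (rule relok_mono)
    show "\<forall>x\<in>A. (if x = w then X else cB w x) \<noteq> L" unfolding cB_def by auto
    show "\<forall>x\<in>A. \<forall>y\<in>A. lex_less x y \<longrightarrow> (if y = w then X else cB w y) = X \<longrightarrow> (if x = w then X else cB w x) = X"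
      unfolding cB_def using lex_less_trans[of _ _ w] ln sub mw by (auto split: if_splits)
  qed
qed

locale PT =
  fixes S S' :: "word set"
  assumes pt: "poset_type S" and sub: "S' \<subseteq> leaves S"
begin

abbreviation T where "T \<equiv> closure S'"

lemma S_closed: "closure S = S" using pt unfolding poset_type_def by auto

lemma T_sub: "T \<subseteq> S"
  using closure_mono[OF order.trans[OF sub leaves_sub]] S_closed by auto

lemma T_closed: "closure T = T" by (rule closure_idem)

lemma levelT_sub: "level T j \<subseteq> level S j"
  using T_sub unfolding level_def by auto

lemma T_child:
  assumes "z \<in> level T j" "z @ [c] \<in> S"
  shows "\<exists>d. z @ [d] \<in> T \<and> z @ [d] \<in> S"
proof -
  have "z \<notin> S'" using assms(2) leaf_noext sub by blast
  then obtain d where "z @ [d] \<in> T" using closure_child assms(1) unfolding level_def by blast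
  then show ?thesis using T_sub by auto
qed

lemma T_image:
  assumes eq: "level S (Suc j) = (\<lambda>z. z @ [c z]) ` level S j"
  shows "level T (Suc j) = (\<lambda>z. z @ [c z]) ` level T j"
proof
  have kid: "z @ [d] \<in> S \<longleftrightarrow> d = c z" if "z \<in> level S j" for z d
  proof -
    have "z @ [d] \<in> S \<longleftrightarrow> z @ [d] \<in> level S (Suc j)" using that unfolding level_def by auto
    also have "\<dots> \<longleftrightarrow> d = c z" unfolding eq using that by auto
    finally show ?thesis .
  qed
  show "level T (Suc j) \<subseteq> (\<lambda>z. z @ [c z]) ` level T j"
  proof
    fix x assume "x \<in> level T (Suc j)"
    then obtain z d where x: "x = z @ [d]" "z \<in> level T j" using level_Suc_closed T_closed by blast
    then have "d = c z" using kid levelT_sub T_sub \<open>x \<in> level T (Suc j)\<close> unfolding level_def by auto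
    then show "x \<in> (\<lambda>z. z @ [c z]) ` level T j" using x by auto
  qed
  show "(\<lambda>z. z @ [c z]) ` level T j \<subseteq> level T (Suc j)"
  proof
    fix x assume "x \<in> (\<lambda>z. z @ [c z]) ` level T j"
    then obtain z where z: "z \<in> level T j" "x = z @ [c z]" by auto
    then have "z @ [c z] \<in> S" using kid levelT_sub by auto
    then obtain d where "z @ [d] \<in> T" "z @ [d] \<in> S" using T_child z by blast
    then have "d = c z" using kid levelT_sub z by auto
    then show "x \<in> level T (Suc j)" using z \<open>z @ [d] \<in> T\<close> unfolding level_def by auto
  qed
qed

lemma T_leaf:
  assumes eq: "level S (Suc j) = app (level S j - {w}) X"
  shows "level T (Suc j) = app (level T j - {w}) X"
proof
  have kid: "z @ [d] \<in> S \<longleftrightarrow> z \<noteq> w \<and> d = X" if "z \<in> level S j" for z d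
  proof -
    have "z @ [d] \<in> S \<longleftrightarrow> z @ [d] \<in> level S (Suc j)" using that unfolding level_def by auto
    also have "\<dots> \<longleftrightarrow> z \<noteq> w \<and> d = X" unfolding eq app_def using that by auto
    finally show ?thesis .
  qed
  show "level T (Suc j) \<subseteq> app (level T j - {w}) X"
  proof
    fix x assume "x \<in> level T (Suc j)"
    then obtain z d where x: "x = z @ [d]" "z \<in> level T j" using level_Suc_closed T_closed by blast
    have "z \<in> level S j" using x levelT_sub by auto
    moreover have "z @ [d] \<in> S" using \<open>x \<in> level T (Suc j)\<close> x T_sub unfolding level_def by auto
    ultimately have "z \<noteq> w \<and> d = X" using kid by auto
    then show "x \<in> app (level T j - {w}) X" using x unfolding app_def by auto
  qed
  show "app (level T j - {w}) X \<subseteq> level T (Suc j)"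
  proof
    fix x assume "x \<in> app (level T j - {w}) X"
    then obtain z where z: "z \<in> level T j" "z \<noteq> w" "x = z @ [X]" unfolding app_def by auto
    then have "z @ [X] \<in> S" using kid levelT_sub by auto
    then obtain d where "z @ [d] \<in> T" "z @ [d] \<in> S" using T_child z by blast
    then have "d = X" using kid levelT_sub z by auto
    then show "x \<in> level T (Suc j)" using z \<open>z @ [d] \<in> T\<close> unfolding level_def by auto
  qed
qed

lemma T_branch:
  assumes eq: "level S (Suc j) = (\<lambda>p. fst p @ [snd p]) ` ((\<lambda>z. (z, cB w z)) ` level S j \<union> {(w, X)})"
    and mw: "w \<in> level S j"
  shows "level T (Suc j) = (\<lambda>z. z @ [cB w z]) ` (level T j - {w}) \<union> {w @ [d] | d. w \<in> level T j \<and> w @ [d] \<in> T}"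
    and "w \<in> level T j \<Longrightarrow> \<exists>d. w @ [d] \<in> T"
    and "w @ [d] \<in> T \<Longrightarrow> d = X \<or> d = R"
proof -
  have kid: "z @ [d] \<in> S \<longleftrightarrow> d = cB w z \<or> (z = w \<and> d = X)" if "z \<in> level S j" for z d
  proof -
    have "z @ [d] \<in> S \<longleftrightarrow> z @ [d] \<in> level S (Suc j)" using that unfolding level_def by auto
    also have "\<dots> \<longleftrightarrow> d = cB w z \<or> (z = w \<and> d = X)" unfolding eq image_Un image_image using that mw
      by (auto simp: image_iff)
    finally show ?thesis .
  qed
  have cBw: "cB w w = R" unfolding cB_def by simp
  show "w @ [d] \<in> T \<Longrightarrow> d = X \<or> d = R" using kid[OF mw] T_sub cBw by auto
  show "w \<in> level T j \<Longrightarrow> \<exists>d. w @ [d] \<in> T" using T_child[of w j X] kid[OF mw] by auto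
  show "level T (Suc j) = (\<lambda>z. z @ [cB w z]) ` (level T j - {w}) \<union> {w @ [d] | d. w \<in> level T j \<and> w @ [d] \<in> T}"
  proof
    show "level T (Suc j) \<subseteq> (\<lambda>z. z @ [cB w z]) ` (level T j - {w}) \<union> {w @ [d] | d. w \<in> level T j \<and> w @ [d] \<in> T}"
    proof
      fix x assume xin: "x \<in> level T (Suc j)"
      then obtain z d where x: "x = z @ [d]" "z \<in> level T j" using level_Suc_closed T_closed by blast
      have "z \<in> level S j" using x levelT_sub by auto
      moreover have "z @ [d] \<in> S" using xin x T_sub unfolding level_def by auto
      ultimately have "d = cB w z \<or> (z = w \<and> d = X)" using kid by auto
      then show "x \<in> (\<lambda>z. z @ [cB w z]) ` (level T j - {w}) \<union> {w @ [d] | d. w \<in> level T j \<and> w @ [d] \<in> T}"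
        using x xin unfolding level_def by auto
    qed
    show "(\<lambda>z. z @ [cB w z]) ` (level T j - {w}) \<union> {w @ [d] | d. w \<in> level T j \<and> w @ [d] \<in> T} \<subseteq> level T (Suc j)"
    proof
      fix x assume "x \<in> (\<lambda>z. z @ [cB w z]) ` (level T j - {w}) \<union> {w @ [d] | d. w \<in> level T j \<and> w @ [d] \<in> T}"
      then consider (a) z where "z \<in> level T j" "z \<noteq> w" "x = z @ [cB w z]" | (b) d where "w \<in> level T j" "x = w @ [d]" "w @ [d] \<in> T"
        by blast
      then show "x \<in> level T (Suc j)"
      proof cases
        case (a z)
        then have "z @ [cB w z] \<in> S" using kid levelT_sub by auto
        then obtain d where "z @ [d] \<in> T" "z @ [d] \<in> S" using T_child a by blast
        then have "d = cB w z" using kid levelT_sub a by auto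
        then show ?thesis using a \<open>z @ [d] \<in> T\<close> unfolding level_def by auto
      next
        case (b d) then show ?thesis unfolding level_def by auto
      qed
    qed
  qed
qed

lemma inv_S: "InvW (level S j)" using inv_level[OF pt] .

end

context PT begin
lemma T_cases:
  "level T (Suc j) = {} \<or>
  (\<exists>w\<in>level T j. (\<forall>u\<in>level T j - {w}. related w u) \<and> level T (Suc j) = app (level T j - {w}) X) \<or>
  (\<exists>w\<in>level T j. level T (Suc j) = (\<lambda>p. fst p @ [snd p]) ` ((\<lambda>z. (z, cB w z)) ` level T j \<union> {(w, X)})) \<or>
  (\<exists>c. level T (Suc j) = (\<lambda>z. z @ [c z]) ` level T j \<and> relok (level T j) c) \<or>
  (perp_step T j \<and> (\<exists>c. level T (Suc j) = (\<lambda>z. z @ [c z]) ` level T j)) \<or>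
  (prec_step T j \<and> (\<exists>c. level T (Suc j) = (\<lambda>z. z @ [c z]) ` level T j))"
proof (cases "\<exists>w\<in>S. j < length w")
  case False
  then have "level S (Suc j) = {}" by (rule level_empty)
  then show ?thesis using levelT_sub[of "Suc j"] by auto
next
  case True
  note elS = eqlen_level[of S j] and elT = eqlen_level[of T j]
  note slS = slin_lex[OF elS]
  have lnS: "length z = j" if "z \<in> level S j" for z using that unfolding level_def by auto
  consider "leaf_step S j" | "branch_step S j" | "perp_step S j" | "prec_step S j"
    using step_cases[OF pt True] by blast
  then show ?thesis
  proof cases
    case 1
    obtain w where w1: "w \<in> level S j" and c: "(\<forall>u \<in> level S j - {w}. related w u) \<and> level S (Suc j) = app (level S j - {w}) X"
      using 1 unfolding leaf_step_def by (rule bexE)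
    note w = w1 c[THEN conjunct1]
    note eq = c[THEN conjunct2]
    note eqT = T_leaf[OF eq]
    show ?thesis
    proof (cases "w \<in> level T j")
      case True
      have r: "\<forall>u\<in>level T j - {w}. related w u" using w(2) levelT_sub[of j] by blast
      have "\<exists>w\<in>level T j. (\<forall>u\<in>level T j - {w}. related w u) \<and> level T (Suc j) = app (level T j - {w}) X"
        by (rule bexI[of _ w], rule conjI[OF r eqT], rule True)
      then show ?thesis by (rule disjI2[OF disjI1])
    next
      case False
      have "level T j - {w} = level T j" using False by blast
      then have e: "level T (Suc j) = (\<lambda>z. z @ [X]) ` level T j" using eqT unfolding app_def by simp
      have rk: "relok (level T j) (\<lambda>z. X)" by (rule relok_mono) auto
      have "\<exists>c. level T (Suc j) = (\<lambda>z. z @ [c z]) ` level T j \<and> relok (level T j) c"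
        by (rule exI, rule conjI[OF e rk])
      then show ?thesis by (rule disjI2[OF disjI2[OF disjI2[OF disjI1]]])
    qed
  next
    case 2
    obtain w where w: "w \<in> level S j"
      and eq0: "level S (Suc j) = app {z \<in> level S j. lex_less z w} X \<union> {w @ [X], w @ [R]}
                        \<union> app {z \<in> level S j. lex_less w z} R" using 2 unfolding branch_step_def by (rule bexE)
    note eq = eq0[unfolded branch_eq[OF elS w]]
    note TB = T_branch[OF eq w]
    note rel = relok_cB[OF elT w elS levelT_sub]
    have cBw: "cB w w = R" unfolding cB_def by simp
    show ?thesis
    proof (cases "w \<in> level T j")
      case False
      then have e1: "{w @ [d] | d. w \<in> level T j \<and> w @ [d] \<in> T} = {}" by simp
      have e2: "level T j - {w} = level T j" using False by simp
      have e: "level T (Suc j) = (\<lambda>z. z @ [cB w z]) ` level T j" using TB(1) unfolding e1 e2 by simp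
      have "\<exists>c. level T (Suc j) = (\<lambda>z. z @ [c z]) ` level T j \<and> relok (level T j) c"
        by (intro exI[where x="cB w"]) (rule conjI[OF e rel(1)])
      then show ?thesis by (rule disjI2[OF disjI2[OF disjI2[OF disjI1]]])
    next
      case wT: True
      have K: "\<And>d. w @ [d] \<in> T \<Longrightarrow> d = X \<or> d = R" using TB(3) .
      obtain d0 where d0: "w @ [d0] \<in> T" using TB(2)[OF wT] by (elim exE)
      have ins: "level T j = insert w (level T j - {w})" using wT by auto
      have img: "(\<lambda>z. z @ [c z]) ` level T j = insert (w @ [c w]) ((\<lambda>z. z @ [c z]) ` (level T j - {w}))" for c
        by (subst ins, subst image_insert) simp
      have img2: "(\<lambda>z. z @ [if z = w then X else cB w z]) ` (level T j - {w}) = (\<lambda>z. z @ [cB w z]) ` (level T j - {w})"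
        by (rule image_cong) auto
      consider "w @ [X] \<in> T" "w @ [R] \<in> T" | "w @ [X] \<notin> T" | "w @ [R] \<notin> T" by blast
      then show ?thesis
      proof cases
        case 1
        then have e1: "{w @ [d] | d. w \<in> level T j \<and> w @ [d] \<in> T} = {w @ [X], w @ [R]}" using K wT by auto
        have "(\<lambda>p. fst p @ [snd p]) ` ((\<lambda>z. (z, cB w z)) ` level T j \<union> {(w, X)}) =
              insert (w @ [X]) ((\<lambda>z. z @ [cB w z]) ` level T j)" by (simp add: image_image)
        also have "\<dots> = level T (Suc j)" unfolding TB(1) e1 img[of "cB w"] cBw by auto
        finally have e: "level T (Suc j) = (\<lambda>p. fst p @ [snd p]) ` ((\<lambda>z. (z, cB w z)) ` level T j \<union> {(w, X)})" ..
        have "\<exists>w\<in>level T j. level T (Suc j) = (\<lambda>p. fst p @ [snd p]) ` ((\<lambda>z. (z, cB w z)) ` level T j \<union> {(w, X)})"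
          by (rule bexI[of _ w], rule e, rule wT)
        then show ?thesis by (rule disjI2[OF disjI2[OF disjI1]])
      next
        case 2
        then have e1: "{w @ [d] | d. w \<in> level T j \<and> w @ [d] \<in> T} = {w @ [R]}" using K d0 wT by auto
        have e: "level T (Suc j) = (\<lambda>z. z @ [cB w z]) ` level T j" unfolding TB(1) e1 img[of "cB w"] cBw by auto
        have "\<exists>c. level T (Suc j) = (\<lambda>z. z @ [c z]) ` level T j \<and> relok (level T j) c"
          by (intro exI[where x="cB w"]) (rule conjI[OF e rel(1)])
        then show ?thesis by (rule disjI2[OF disjI2[OF disjI2[OF disjI1]]])
      next
        case 3
        then have e1: "{w @ [d] | d. w \<in> level T j \<and> w @ [d] \<in> T} = {w @ [X]}" using K d0 wT by auto
        have e: "level T (Suc j) = (\<lambda>z. z @ [if z = w then X else cB w z]) ` level T j"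
          unfolding TB(1) e1 img[of "\<lambda>z. if z = w then X else cB w z"] img2 by auto
        have "\<exists>c. level T (Suc j) = (\<lambda>z. z @ [c z]) ` level T j \<and> relok (level T j) c"
          by (intro exI[where x="\<lambda>z. if z = w then X else cB w z"]) (rule conjI[OF e rel(2)])
        then show ?thesis by (rule disjI2[OF disjI2[OF disjI2[OF disjI1]]])
      qed
    qed
  next
    case 3
    from 3 obtain v w where vw: "v \<in> level S j" "w \<in> level S j" "unrelated v w" "lex_less v w"
        and eq0: "level S (Suc j) = app {z \<in> level S j. lex_less z v} X \<union> {v @ [R]}
         \<union> app {z \<in> level S j. lex_less v z \<and> lex_less z w \<and> perp z v} X
         \<union> app {z \<in> level S j. lex_less v z \<and> lex_less z w \<and> \<not> perp z v} R
         \<union> {w @ [X]} \<union> app {z \<in> level S j. lex_less w z} R"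
        and cA: "\<forall>u \<in> level S j. lex_less v u \<and> lex_less u w \<longrightarrow> perp u v \<or> perp u w"
        unfolding perp_step_def by (elim bexE conjE) (rule that; assumption)
    note eq = eq0[unfolded perp_eq[OF elS vw(1,2,4)]]
    note eqT = T_image[OF eq]
    show ?thesis
    proof (cases "v \<in> level T j \<and> w \<in> level T j")
      case True
      have e: "level T (Suc j) = app {z \<in> level T j. lex_less z v} X \<union> {v @ [R]}
         \<union> app {z \<in> level T j. lex_less v z \<and> lex_less z w \<and> perp z v} X
         \<union> app {z \<in> level T j. lex_less v z \<and> lex_less z w \<and> \<not> perp z v} R
         \<union> {w @ [X]} \<union> app {z \<in> level T j. lex_less w z} R"
        unfolding eqT perp_eq[OF elT True[THEN conjunct1] True[THEN conjunct2] vw(4)] ..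
      have a: "\<forall>u \<in> level T j. lex_less v u \<and> lex_less u w \<longrightarrow> perp u v \<or> perp u w"
        using cA levelT_sub by auto
      have ps: "perp_step T j"
        unfolding perp_step_def
        by (intro bexI[of _ v] bexI[of _ w] conjI) (use True vw(3,4) e a in \<open>simp_all only:\<close>)
      have "perp_step T j \<and> (\<exists>c. level T (Suc j) = (\<lambda>z. z @ [c z]) ` level T j)"
        by (rule conjI[OF ps], rule exI, rule eqT)
      then show ?thesis by (rule disjI2[OF disjI2[OF disjI2[OF disjI2[OF disjI1]]]])
    next
      case False
      have cA': "\<forall>u\<in>level S j. lex_less v u \<and> lex_less u w \<longrightarrow> perp v u \<or> perp u w" using cA perp_sym by blast
      have rk: "relok (level T j) (cP lex_less perp v w)"
        unfolding relok_def
      proof (intro ballI impI)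
        fix x y assume m: "x \<in> level T j" "y \<in> level T j" and xy: "lex_less x y"
        have mS: "x \<in> level S j" "y \<in> level S j" using m levelT_sub by auto
        note pl = perp_letters[OF inv_S slS vw(1,2,4) cA' mS xy]
        have "\<not> (x = v \<and> y = w)" using False m by auto
        then show "\<not> (cP lex_less perp v w x = R \<and> cP lex_less perp v w y = L) \<and>
          (let_less (cP lex_less perp v w y) (cP lex_less perp v w x) \<longrightarrow> perp x y) \<and>
          (cP lex_less perp v w x = L \<and> cP lex_less perp v w y = R \<longrightarrow> prec x y \<and> \<not> perp x y)"
          using pl cP_not_L[of lex_less perp v w] by auto
      qed
      have "\<exists>c. level T (Suc j) = (\<lambda>z. z @ [c z]) ` level T j \<and> relok (level T j) c"
        by (rule exI, rule conjI[OF eqT rk])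
      then show ?thesis by (rule disjI2[OF disjI2[OF disjI2[OF disjI1]]])
    qed
  next
    case 4
    from 4 obtain v w where vw: "v \<in> level S j" "w \<in> level S j" "unrelated v w" "lex_less v w"
        and eq0: "level S (Suc j) = app {z \<in> level S j. lex_less z v \<and> perp z v} X
         \<union> app {z \<in> level S j. lex_less z v \<and> \<not> perp z v} L \<union> {v @ [L]}
         \<union> app {z \<in> level S j. lex_less v z \<and> lex_less z w} X \<union> {w @ [R]}
         \<union> app {z \<in> level S j. lex_less w z \<and> perp w z} X
         \<union> app {z \<in> level S j. lex_less w z \<and> \<not> perp w z} R"
        and B1: "\<forall>u \<in> level S j. lex_less u v \<longrightarrow> preceq u w \<or> perp u v"
        and B2: "\<forall>u \<in> level S j. lex_less w u \<longrightarrow> preceq v u \<or> perp w u"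
        unfolding prec_step_def by (elim bexE conjE) (rule that; assumption)
    note eq = eq0[unfolded prec_eq[OF elS vw(1,2,4)]]
    note eqT = T_image[OF eq]
    show ?thesis
    proof (cases "v \<in> level T j \<and> w \<in> level T j")
      case True
      have e: "level T (Suc j) = app {z \<in> level T j. lex_less z v \<and> perp z v} X
         \<union> app {z \<in> level T j. lex_less z v \<and> \<not> perp z v} L \<union> {v @ [L]}
         \<union> app {z \<in> level T j. lex_less v z \<and> lex_less z w} X \<union> {w @ [R]}
         \<union> app {z \<in> level T j. lex_less w z \<and> perp w z} X
         \<union> app {z \<in> level T j. lex_less w z \<and> \<not> perp w z} R"
          unfolding eqT prec_eq[OF elT True[THEN conjunct1] True[THEN conjunct2] vw(4)] ..
      have b1: "\<forall>u \<in> level T j. lex_less u v \<longrightarrow> preceq u w \<or> perp u v"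
          using B1 levelT_sub by auto
      have b2: "\<forall>u \<in> level T j. lex_less w u \<longrightarrow> preceq v u \<or> perp w u"
          using B2 levelT_sub by auto
      have ps: "prec_step T j"
        unfolding prec_step_def
        by (intro bexI[of _ v] bexI[of _ w] conjI) (use True vw(3,4) e b1 b2 in \<open>simp_all only:\<close>)
      have "prec_step T j \<and> (\<exists>c. level T (Suc j) = (\<lambda>z. z @ [c z]) ` level T j)"
        by (rule conjI[OF ps], rule exI, rule eqT)
      then show ?thesis by (rule disjI2[OF disjI2[OF disjI2[OF disjI2[OF disjI2]]]])
    next
      case False
      have B1': "\<forall>u\<in>level S j. lex_less u v \<longrightarrow> prec u w \<or> perp u v"
      proof (intro ballI impI)
        fix u assume "u \<in> level S j" "lex_less u v"
        then have "u \<noteq> w" using lex_less_asym[of v w] lex_less_trans[of u v w] lnS vw by auto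
        then show "prec u w \<or> perp u v" using B1 \<open>u \<in> level S j\<close> \<open>lex_less u v\<close> unfolding preceq_def by auto
      qed
      have B2': "\<forall>u\<in>level S j. lex_less w u \<longrightarrow> prec v u \<or> perp w u"
      proof (intro ballI impI)
        fix u assume "u \<in> level S j" "lex_less w u"
        then have "u \<noteq> v" using lex_less_asym[of v w] lex_less_trans[of v w u] lnS vw by auto
        then show "prec v u \<or> perp w u" using B2 \<open>u \<in> level S j\<close> \<open>lex_less w u\<close> unfolding preceq_def by auto
      qed
      have un': "\<not> perp v w" using unrelated_D[OF vw(3)] by auto
      have rk: "relok (level T j) (cQ lex_less perp v w)"
        unfolding relok_def
      proof (intro ballI impI)
        fix x y assume m: "x \<in> level T j" "y \<in> level T j" and xy: "lex_less x y"
        have mS: "x \<in> level S j" "y \<in> level S j" using m levelT_sub by auto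
        note pl = prec_letters[OF inv_S slS vw(1,2,4) un' B1' B2' mS xy]
        have nvw: "\<not> (x = v \<and> y = w)" using False m by auto
        note p3 = prec_letters3[OF inv_S slS vw(1,2,4) B1' B2' mS xy _ _ nvw]
        note nrl = cQ_noRL[OF slS vw(1,2,4) mS xy, of perp]
        show "\<not> (cQ lex_less perp v w x = R \<and> cQ lex_less perp v w y = L) \<and>
          (let_less (cQ lex_less perp v w y) (cQ lex_less perp v w x) \<longrightarrow> perp x y) \<and>
          (cQ lex_less perp v w x = L \<and> cQ lex_less perp v w y = R \<longrightarrow> prec x y \<and> \<not> perp x y)"
          using pl(1) p3 nrl by auto
      qed
      have "\<exists>c. level T (Suc j) = (\<lambda>z. z @ [c z]) ` level T j \<and> relok (level T j) c"
        by (rule exI, rule conjI[OF eqT rk])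
      then show ?thesis by (rule disjI2[OF disjI2[OF disjI2[OF disjI1]]])
    qed
  qed
qed

end


lemma RLp_irr[simp]: "\<not> RLp a a" unfolding RLp_def by auto

lemma compat_ord_refl: "compat_ord a a"
  unfolding compat_ord_alt by simp

lemma relabel_rel:
  assumes el: "eqlen A n" and inv: "InvW A" and rk: "relok A c" and mx: "x \<in> A" and my: "y \<in> A"
  shows "(lex_le (x @ [c x]) (y @ [c y]) \<longleftrightarrow> lex_le x y) \<and> (preceq (x @ [c x]) (y @ [c y]) \<longleftrightarrow> preceq x y) \<and>
         (perp (x @ [c x]) (y @ [c y]) \<longleftrightarrow> perp x y) \<and>
         (lex_le x y \<longrightarrow> (compat_ord (x @ [c x]) (y @ [c y]) \<longleftrightarrow> compat_ord x y))"
proof -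
  have len: "length x = length y" using el mx my unfolding eqlen_def by auto
  have key: "(lex_le (a @ [c a]) (b @ [c b]) \<longleftrightarrow> lex_le a b) \<and> \<not> lex_le (b @ [c b]) (a @ [c a]) \<and> \<not> lex_le b a \<and>
         (preceq (a @ [c a]) (b @ [c b]) \<longleftrightarrow> preceq a b) \<and> \<not> preceq (b @ [c b]) (a @ [c a]) \<and> \<not> preceq b a \<and>
         (perp (a @ [c a]) (b @ [c b]) \<longleftrightarrow> perp a b) \<and>
         (compat_ord (a @ [c a]) (b @ [c b]) \<longleftrightarrow> compat_ord a b)"
    if ma: "a \<in> A" and mb: "b \<in> A" and ab: "lex_less a b" for a b
  proof -
    have lab: "length a = length b" using el ma mb unfolding eqlen_def by auto
    have np: "\<not> prec b a" using InvA_pair[OF inv ma mb] ab by auto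
    note r = snoc_rels[OF lab ab np, where x="c a" and y="c b"]
    have R1: "\<not> (c a = R \<and> c b = L)" and R2: "let_less (c b) (c a) \<longrightarrow> perp a b"
      and R3: "c a = L \<and> c b = R \<longrightarrow> prec a b \<and> \<not> perp a b"
      using rk ma mb ab unfolding relok_def by auto
    have ne: "a \<noteq> b" "a @ [c a] \<noteq> b @ [c b]" using ab by auto
    have p1: "prec (a @ [c a]) (b @ [c b]) \<longleftrightarrow> prec a b" using r(3) R3 by auto
    have p2: "perp (a @ [c a]) (b @ [c b]) \<longleftrightarrow> perp a b" using r(5) R2 by auto
    have l1: "lex_le (a @ [c a]) (b @ [c b])" "lex_le a b" using r(1) ab unfolding lex_less_def by auto
    have l2: "\<not> lex_le (b @ [c b]) (a @ [c a])" "\<not> lex_le b a"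
      using r(2) ne lex_less_asym[OF lab ab] unfolding lex_less_def by auto
    have rl1: "RLp (a @ [c a]) (b @ [c b]) \<longleftrightarrow> RLp a b" using RLp_snoc[OF lab] R1 by auto
    have rl2: "RLp (b @ [c b]) (a @ [c a]) \<longleftrightarrow> RLp b a \<or> (c b = R \<and> c a = L)" using RLp_snoc[of b a] lab by auto
    have co: "compat_ord (a @ [c a]) (b @ [c b]) \<longleftrightarrow> compat_ord a b"
      unfolding compat_ord_alt using rl1 rl2 p1 p2 R3 by auto
    show ?thesis using p1 p2 l1 l2 r(4) np ne co unfolding preceq_def by auto
  qed
  have tri: "lex_less x y \<or> x = y \<or> lex_less y x" using lex_less_trich[OF len] .
  then show ?thesis
  proof (elim disjE)
    assume "lex_less x y" then show ?thesis using key[OF mx my] by auto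
  next
    assume "x = y" then show ?thesis using compat_ord_refl by (auto simp: preceq_def)
  next
    assume "lex_less y x" then show ?thesis using key[OF my mx] perp_sym by metis
  qed
qed

lemma UNIV_letter: "(UNIV :: letter set) = {L, X, R}"
  using letter.exhaust by auto

lemma finite_letter[simp]: "finite (UNIV :: letter set)"
  unfolding UNIV_letter by simp

lemma finite_level_closed:
  assumes cl: "closure C = C"
  shows "finite (level C j)"
proof (induction j)
  case 0
  have "level C 0 \<subseteq> {[]}" unfolding level_def by auto
  then show ?case using finite_subset by blast
next
  case (Suc j)
  have "level C (Suc j) \<subseteq> (\<lambda>p. fst p @ [snd p]) ` (level C j \<times> UNIV)"
  proof
    fix x assume "x \<in> level C (Suc j)"
    then obtain z c where "x = z @ [c]" "z \<in> level C j" using level_Suc_closed[OF _ cl] by blast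
    then show "x \<in> (\<lambda>p. fst p @ [snd p]) ` (level C j \<times> UNIV)" by force
  qed
  moreover have "finite ((\<lambda>p. fst p @ [snd p]) ` (level C j \<times> (UNIV :: letter set)))"
    using Suc by simp
  ultimately show ?case using finite_subset by blast
qed

lemma lex_le_take:
  assumes "length x = Suc n" "length y = Suc n" "lex_le x y"
  shows "lex_le (take n x) (take n y)"
proof -
  obtain x0 a where x: "x = x0 @ [a]" "length x0 = n" using snoc_cases_len[OF assms(1)] by blast
  obtain y0 b where y: "y = y0 @ [b]" "length y0 = n" using snoc_cases_len[OF assms(2)] by blast
  show ?thesis using assms(3) lex_le_snoc[of x0 y0 a b] x y by auto
qed

lemma mono_bij_id:
  assumes fin: "finite A" and el: "eqlen A n" and bij: "bij_betw h A A"
    and mono: "\<forall>x\<in>A. \<forall>y\<in>A. lex_le x y \<longrightarrow> lex_le (h x) (h y)"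
  shows "\<forall>x\<in>A. h x = x"
proof -
  have ln: "length z = n" if "z \<in> A" for z using el that by (rule eqlen_len)
  have hA: "h x \<in> A" if "x \<in> A" for x using bij that unfolding bij_betw_def by auto
  have inj: "inj_on h A" using bij unfolding bij_betw_def by auto
  have surj: "\<exists>z\<in>A. h z = x" if "x \<in> A" for x using bij that unfolding bij_betw_def by force
  define cnt where "cnt x = card {y\<in>A. lex_less y x}" for x
  have cnt_less: "cnt y < cnt x" if "x \<in> A" "y \<in> A" "lex_less y x" for x y
  proof -
    have "{z\<in>A. lex_less z y} \<subseteq> {z\<in>A. lex_less z x}"
      using lex_less_trans[of _ y x] ln that by auto
    moreover have "y \<in> {z\<in>A. lex_less z x} - {z\<in>A. lex_less z y}" using that by auto
    ultimately have "{z\<in>A. lex_less z y} \<subset> {z\<in>A. lex_less z x}" by blast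
    then show ?thesis unfolding cnt_def using fin by (simp add: psubset_card_mono)
  qed
  have "\<forall>x\<in>A. cnt x = k \<longrightarrow> h x = x" for k
  proof (induction k rule: less_induct)
    case (less k)
    show ?case
    proof (intro ballI impI)
      fix x assume mx: "x \<in> A" and ck: "cnt x = k"
      have IH: "h y = y" if "y \<in> A" "lex_less y x" for y
        using less.IH[of "cnt y"] cnt_less[OF mx that] ck that by auto
      have hx: "h x \<in> A" using hA[OF mx] .
      have "lex_less (h x) x \<or> h x = x \<or> lex_less x (h x)" using lex_less_trich[of "h x" x] ln hx mx by auto
      then show "h x = x"
      proof (elim disjE)
        assume a: "lex_less (h x) x"
        then have "h (h x) = h x" using IH hx by auto
        then show ?thesis using inj hx mx unfolding inj_on_def by auto
      next
        assume a: "lex_less x (h x)"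
        obtain z where z: "z \<in> A" "h z = x" using surj[OF mx] by blast
        have "z \<noteq> x" using z a by auto
        then have "lex_less z x \<or> lex_less x z" using lex_less_trich[of z x] ln z mx by auto
        then show ?thesis
        proof
          assume "lex_less z x" then have "h z = z" using IH z by auto
          then show ?thesis using z \<open>z \<noteq> x\<close> by auto
        next
          assume "lex_less x z"
          then have "lex_le (h x) (h z)" using mono mx z unfolding lex_less_def by auto
          then have "lex_le (h x) x" using z by auto
          then show ?thesis using a lex_less_asym[of x "h x"] ln hx mx unfolding lex_less_def by auto
        qed
      qed auto
    qed
  qed
  then show ?thesis by blast
qed

context PT begin

lemma finite_levelT: "finite (level T j)" using finite_level_closed[OF T_closed] .

lemma card_app_minus:
  assumes "finite A" "w \<in> A"
  shows "card (app (A - {w}) X) < card A"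
proof -
  have "card (app (A - {w}) X) = card (A - {w})" unfolding app_def by (rule card_image) (auto simp: inj_on_def)
  also have "\<dots> < card A" using assms by (rule card_Diff1_less)
  finally show ?thesis .
qed

lemma card_branch:
  assumes "finite A" "w \<in> A"
  shows "card ((\<lambda>p. fst p @ [snd p]) ` ((\<lambda>z. (z, cB w z)) ` A \<union> {(w, X)})) = Suc (card A)"
proof -
  have inj: "inj_on (\<lambda>p. fst p @ [snd p]) P" for P :: "(word \<times> letter) set"
    unfolding inj_on_def by (auto simp: prod_eq_iff)
  have "(w, X) \<notin> (\<lambda>z. (z, cB w z)) ` A" unfolding cB_def by auto
  moreover have "card ((\<lambda>z. (z, cB w z)) ` A) = card A" by (rule card_image) (auto simp: inj_on_def)
  ultimately have c1: "card ((\<lambda>z. (z, cB w z)) ` A \<union> {(w, X)}) = Suc (card A)" using assms by simp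
  show ?thesis unfolding card_image[OF inj] using c1 .
qed

lemma nonint_img:
  assumes "j \<notin> interesting S'"
  shows "\<exists>c. level T (Suc j) = (\<lambda>z. z @ [c z]) ` level T j"
proof -
  have "isomorphic_level (level T j) (level T (Suc j))" using assms unfolding interesting_def by blast
  then obtain F where "bij_betw F (level T j) (level T (Suc j))" unfolding isomorphic_level_def by blast
  then have cc: "card (level T (Suc j)) = card (level T j)" by (simp add: bij_betw_same_card)
  note fin = finite_levelT[of j]
  consider (a) "level T (Suc j) = {}"
    | (b) "\<exists>w\<in>level T j. (\<forall>u\<in>level T j - {w}. related w u) \<and> level T (Suc j) = app (level T j - {w}) X"
    | (c) "\<exists>w\<in>level T j. level T (Suc j) = (\<lambda>p. fst p @ [snd p]) ` ((\<lambda>z. (z, cB w z)) ` level T j \<union> {(w, X)})"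
    | (d) "\<exists>c. level T (Suc j) = (\<lambda>z. z @ [c z]) ` level T j"
    using T_cases[of j] by blast
  then show ?thesis
  proof cases
    case a
    then have "level T j = {}" using cc fin by simp
    then show ?thesis using a by auto
  next
    case b
    then obtain w where w: "w \<in> level T j" "level T (Suc j) = app (level T j - {w}) X" by blast
    have False using card_app_minus[OF fin w(1)] cc unfolding w(2) by simp
    then show ?thesis ..
  next
    case c
    then obtain w where w: "w \<in> level T j" "level T (Suc j) = (\<lambda>p. fst p @ [snd p]) ` ((\<lambda>z. (z, cB w z)) ` level T j \<union> {(w, X)})" by blast
    have False using card_branch[OF fin w(1)] cc unfolding w(2) by simp
    then show ?thesis ..
  qed
qed

lemma nonint_rel:
  assumes ni: "j \<notin> interesting S'" and eqT: "level T (Suc j) = (\<lambda>z. z @ [c z]) ` level T j"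
    and mx: "x \<in> level T j" and my: "y \<in> level T j"
  shows "(lex_le (x @ [c x]) (y @ [c y]) \<longleftrightarrow> lex_le x y) \<and> (preceq (x @ [c x]) (y @ [c y]) \<longleftrightarrow> preceq x y) \<and>
         (perp (x @ [c x]) (y @ [c y]) \<longleftrightarrow> perp x y)"
proof -
  let ?A = "level T j" and ?B = "level T (Suc j)" and ?f = "\<lambda>z. z @ [c z]"
  have "isomorphic_level ?A ?B" using ni unfolding interesting_def by blast
  then obtain F where bF: "bij_betw F ?A ?B" and pF: "\<forall>x\<in>?A. \<forall>y\<in>?A. (lex_le x y \<longleftrightarrow> lex_le (F x) (F y)) \<and>
      (preceq x y \<longleftrightarrow> preceq (F x) (F y)) \<and> (perp x y \<longleftrightarrow> perp (F x) (F y))"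
    unfolding isomorphic_level_def by blast
  have lnA: "length z = j" if "z \<in> ?A" for z using that unfolding level_def by auto
  have FB: "F z \<in> ?B" if "z \<in> ?A" for z using bF that unfolding bij_betw_def by auto
  have g_f: "take j (?f z) = z" if "z \<in> ?A" for z using lnA[OF that] by simp
  have bg: "bij_betw (take j) ?B ?A"
  proof (rule bij_betw_byWitness[where f'="?f"])
    show "\<forall>a\<in>?B. ?f (take j a) = a" unfolding eqT using g_f by auto
    show "\<forall>a'\<in>?A. take j (?f a') = a'" using g_f by auto
    show "take j ` ?B \<subseteq> ?A" unfolding eqT using g_f by auto
    show "?f ` ?A \<subseteq> ?B" unfolding eqT by auto
  qed
  have hbij: "bij_betw (take j \<circ> F) ?A ?A" using bij_betw_trans[OF bF bg] .
  have hmono: "\<forall>x\<in>?A. \<forall>y\<in>?A. lex_le x y \<longrightarrow> lex_le ((take j \<circ> F) x) ((take j \<circ> F) y)"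
  proof (intro ballI impI)
    fix x y assume m: "x \<in> ?A" "y \<in> ?A" "lex_le x y"
    then have "lex_le (F x) (F y)" using pF by auto
    moreover have "length (F x) = Suc j" "length (F y) = Suc j" using FB m(1,2) unfolding level_def by auto
    ultimately show "lex_le ((take j \<circ> F) x) ((take j \<circ> F) y)" using lex_le_take by auto
  qed
  have hid: "\<forall>x\<in>?A. take j (F x) = x"
    using mono_bij_id[OF finite_levelT eqlen_level hbij hmono] by auto
  have Ff: "F z = ?f z" if zA: "z \<in> ?A" for z
  proof -
    obtain z' where z': "z' \<in> ?A" "F z = ?f z'" using FB[OF zA] unfolding eqT by auto
    have "take j (F z) = z'" using z' g_f by simp
    then have "z' = z" using hid zA by simp
    then show ?thesis using z' by simp
  qed
  show ?thesis using pF mx my Ff[OF mx] Ff[OF my] by auto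
qed

end

context PT begin

lemma relabel_not_interesting:
  assumes eqT: "level T (Suc j) = (\<lambda>z. z @ [c z]) ` level T j" and rk: "relok (level T j) c"
  shows "j \<notin> interesting S'"
proof -
  let ?A = "level T j" and ?f = "\<lambda>z. z @ [c z]"
  have el: "eqlen ?A j" by (rule eqlen_level)
  have inv: "InvW ?A" using InvA_subset[OF inv_S levelT_sub] .
  note rr = relabel_rel[OF el inv rk]
  have inj: "inj_on ?f ?A" unfolding inj_on_def by auto
  have iso: "isomorphic_level ?A (level T (Suc j))"
    unfolding isomorphic_level_def eqT
    by (rule exI[of _ ?f], rule conjI, rule inj_on_imp_bij_betw[OF inj]) (use rr in auto)
  have comp: "\<not> (\<not> compatible u v \<and> compatible (take j u) (take j v))" if uv: "u \<in> level T (Suc j)" "v \<in> level T (Suc j)" for u v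
  proof -
    obtain x y where xy: "x \<in> ?A" "y \<in> ?A" "u = ?f x" "v = ?f y" using uv unfolding eqT by blast
    have lx: "length x = j" "length y = j" using xy(1,2) unfolding level_def by auto
    have tk: "take j u = x" "take j v = y" using xy lx by auto
    have tot: "lex_le x y \<or> lex_le y x" using lex_le_total[of x y] lx by auto
    have "compatible u v \<longleftrightarrow> compatible x y"
      unfolding compatible_def xy(3,4) using rr[OF xy(1,2)] rr[OF xy(2,1)] tot by auto
    then show ?thesis using tk by auto
  qed
  show ?thesis unfolding interesting_def using iso comp by blast
qed

end


lemma nths_snoc: "nths (z @ [c]) I = nths z I @ (if length z \<in> I then [c] else [])"
  by (simp add: nths_append nths_singleton)

definition relsame :: "word \<Rightarrow> word \<Rightarrow> word \<Rightarrow> word \<Rightarrow> bool" where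
  "relsame x y x' y' \<longleftrightarrow> (x = y \<longleftrightarrow> x' = y') \<and> (lex_le x y \<longleftrightarrow> lex_le x' y') \<and>
     (prec x y \<longleftrightarrow> prec x' y') \<and> (perp x y \<longleftrightarrow> perp x' y')"

lemma relsame_lts:
  assumes "length x = length y" "length x' = length y'" "relsame x y x' y'" "relsame y x y' x'"
  shows "lts x y \<longleftrightarrow> lts x' y'"
  using assms lts_level[of x y] lts_level[of x' y'] unfolding relsame_def lex_less_def by auto

lemma relsame_snoc:
  assumes l: "length x = length y" "length x' = length y'"
    and r1: "relsame x y x' y'" and r2: "relsame y x y' x'"
  shows "relsame (x @ [a]) (y @ [b]) (x' @ [a]) (y' @ [b])"
proof -
  have lt1: "lts x y \<longleftrightarrow> lts x' y'" using relsame_lts[OF l r1 r2] .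
  have lt2: "lts y x \<longleftrightarrow> lts y' x'" using relsame_lts[OF l(1)[symmetric] l(2)[symmetric] r2 r1] .
  show ?thesis unfolding relsame_def
    using r1 lt1 lt2 lex_le_snoc[OF l(1)] lex_le_snoc[OF l(2)] prec_snoc[OF l(1)] prec_snoc[OF l(2)]
      perp_snoc[OF l(1)] perp_snoc[OF l(2)]
    unfolding relsame_def by auto
qed

context PT begin

abbreviation I where "I \<equiv> interesting S'"
abbreviation tm where "tm \<equiv> tau_map S'"

lemma tm_def': "tm w = nths w I" unfolding tau_map_def ..

lemma nonint_relsame:
  assumes ni: "j \<notin> I" and mx: "x \<in> level T (Suc j)" and my: "y \<in> level T (Suc j)"
  shows "relsame x y (take j x) (take j y)"
proof -
  obtain c where eqT: "level T (Suc j) = (\<lambda>z. z @ [c z]) ` level T j" using nonint_img[OF ni] by blast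
  obtain x0 y0 where xy: "x0 \<in> level T j" "y0 \<in> level T j" "x = x0 @ [c x0]" "y = y0 @ [c y0]"
    using mx my unfolding eqT by blast
  have ln: "length x0 = j" "length y0 = j" using xy unfolding level_def by auto
  note r = nonint_rel[OF ni eqT xy(1,2)]
  have eq: "x = y \<longleftrightarrow> x0 = y0" using xy by auto
  show ?thesis unfolding relsame_def using r eq xy ln by (auto simp: preceq_def)
qed

lemma tau_relsame: "\<forall>x\<in>level T m. \<forall>y\<in>level T m. relsame x y (tm x) (tm y)"
proof (induction m)
  case 0
  have h: "x \<in> level T 0 \<Longrightarrow> x = []" for x unfolding level_def by auto
  show ?case
  proof (intro ballI)
    fix x y assume "x \<in> level T 0" "y \<in> level T 0"
    then have "x = []" "y = []" using h by auto
    then show "relsame x y (tm x) (tm y)" unfolding relsame_def tm_def' by simp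
  qed
next
  case (Suc m)
  show ?case
  proof (intro ballI)
    fix x y assume mx: "x \<in> level T (Suc m)" and my: "y \<in> level T (Suc m)"
    obtain x0 a where x: "x = x0 @ [a]" "x0 \<in> level T m" using level_Suc_closed[OF mx T_closed] by blast
    obtain y0 b where y: "y = y0 @ [b]" "y0 \<in> level T m" using level_Suc_closed[OF my T_closed] by blast
    have ln: "length x0 = m" "length y0 = m" using x y unfolding level_def by auto
    have IH: "relsame x0 y0 (tm x0) (tm y0)" "relsame y0 x0 (tm y0) (tm x0)" using Suc.IH x(2) y(2) by auto
    have lt: "length (tm x0) = length (tm y0)" unfolding tm_def' using ln by (simp add: length_nths)
    show "relsame x y (tm x) (tm y)"
    proof (cases "m \<in> I")
      case True
      have "tm x = tm x0 @ [a]" "tm y = tm y0 @ [b]" unfolding tm_def' x y nths_snoc using ln True by auto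
      then show ?thesis using relsame_snoc[OF _ lt IH] ln x y by auto
    next
      case False
      have t: "tm x = tm x0" "tm y = tm y0" unfolding tm_def' x y nths_snoc using ln False by auto
      have "relsame x y x0 y0" using nonint_relsame[OF False mx my] x y ln by auto
      then show ?thesis using IH(1) t unfolding relsame_def by auto
    qed
  qed
qed


definition cnt :: "nat \<Rightarrow> nat" where "cnt j = card {i. i < j \<and> i \<in> I}"

lemma len_tm: "length (tm w) = cnt (length w)"
  unfolding tm_def' cnt_def by (simp add: length_nths)

lemma cnt_Suc: "cnt (Suc j) = cnt j + (if j \<in> I then 1 else 0)"
proof -
  have "{i. i < Suc j \<and> i \<in> I} = {i. i < j \<and> i \<in> I} \<union> (if j \<in> I then {j} else {})" by (auto simp: less_Suc_eq)
  moreover have "finite {i. i < j \<and> i \<in> I}" by simp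
  ultimately show ?thesis unfolding cnt_def by (auto simp: card_insert_if)
qed

lemma cnt_mono: "a \<le> b \<Longrightarrow> cnt a \<le> cnt b"
  unfolding cnt_def by (rule card_mono) auto

lemma cnt_gap: "cnt a = cnt b \<Longrightarrow> a \<le> j \<Longrightarrow> j < b \<Longrightarrow> j \<notin> I"
proof
  assume h: "cnt a = cnt b" "a \<le> j" "j < b" "j \<in> I"
  have "cnt (Suc j) \<le> cnt b" using h by (intro cnt_mono) auto
  moreover have "cnt a \<le> cnt j" using h by (intro cnt_mono) auto
  ultimately show False using cnt_Suc[of j] h by auto
qed

lemma find_i: "k < cnt n \<Longrightarrow> \<exists>i<n. i \<in> I \<and> cnt i = k"
proof (induction n)
  case 0 then show ?case by (simp add: cnt_def)
next
  case (Suc n)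
  show ?case
  proof (cases "k < cnt n")
    case True then obtain i where "i < n" "i \<in> I" "cnt i = k" using Suc.IH by blast
    then show ?thesis by (intro exI[of _ i]) auto
  next
    case False
    then have "k = cnt n \<and> n \<in> I" using Suc.prems cnt_Suc[of n] by (auto split: if_splits)
    then show ?thesis by auto
  qed
qed

lemma nths_none: "\<forall>i<length xs. i \<notin> A \<Longrightarrow> nths xs A = []"
proof -
  assume "\<forall>i<length xs. i \<notin> A"
  then have "{i. i < length xs \<and> i \<in> A} = {}" by auto
  then have "length (nths xs A) = 0" using length_nths[of xs A] by simp
  then show ?thesis by simp
qed

lemma tm_take:
  assumes "cnt n = cnt (length x)" "n \<le> length x"
  shows "tm (take n x) = tm x"
proof -
  have "nths (drop n x) {j. j + n \<in> I} = []"
    using cnt_gap[OF assms(1)] assms(2) by (intro nths_none) auto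
  moreover have "nths x I = nths (take n x) I @ nths (drop n x) {j. j + length (take n x) \<in> I}"
    using nths_append[of "take n x" "drop n x" I] by simp
  ultimately show ?thesis unfolding tm_def' using assms(2) by (simp add: min_def)
qed

lemma extend:
  assumes "x \<in> level T a" "cnt a = cnt b" "a \<le> b"
  shows "\<exists>x'\<in>level T b. tm x' = tm x"
  using assms
proof (induction b)
  case 0 then show ?case by auto
next
  case (Suc b)
  show ?case
  proof (cases "a = Suc b")
    case True then show ?thesis using Suc.prems by auto
  next
    case False
    then have ab: "a \<le> b" using Suc.prems by auto
    have cb: "cnt a = cnt b" using cnt_mono[OF ab] cnt_mono[of b "Suc b"] Suc.prems by auto
    obtain x' where x': "x' \<in> level T b" "tm x' = tm x" using Suc.IH[OF Suc.prems(1) cb ab] by blast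
    have ni: "b \<notin> I" using cnt_gap[OF Suc.prems(2) ab] by auto
    obtain c where eqT: "level T (Suc b) = (\<lambda>z. z @ [c z]) ` level T b" using nonint_img[OF ni] by blast
    have "x' @ [c x'] \<in> level T (Suc b)" unfolding eqT using x' by auto
    moreover have "tm (x' @ [c x']) = tm x'" unfolding tm_def' nths_snoc using ni x' unfolding level_def by auto
    ultimately show ?thesis using x' by auto
  qed
qed

abbreviation G where "G \<equiv> tm ` T"

lemma levelG_k:
  assumes iI: "i \<in> I" and ci: "cnt i = k"
  shows "level G k = tm ` level T i"
proof
  show "tm ` level T i \<subseteq> level G k" using ci len_tm unfolding level_def by auto
  show "level G k \<subseteq> tm ` level T i"
  proof
    fix y assume "y \<in> level G k"
    then obtain x where x: "x \<in> T" "y = tm x" "cnt (length x) = k" unfolding level_def using len_tm by auto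
    have "length x \<le> i"
    proof (rule ccontr)
      assume "\<not> length x \<le> i"
      then have "cnt (Suc i) \<le> cnt (length x)" by (intro cnt_mono) auto
      then show False using cnt_Suc[of i] iI ci x by auto
    qed
    then obtain x' where x': "x' \<in> level T i" "tm x' = tm x"
      using extend[of x "length x" i] x ci unfolding level_def by auto
    then show "y \<in> tm ` level T i" using x by (metis image_eqI)
  qed
qed

lemma levelG_Sk:
  assumes iI: "i \<in> I" and ci: "cnt i = k"
  shows "level G (Suc k) = tm ` level T (Suc i)"
proof
  have cs: "cnt (Suc i) = Suc k" using cnt_Suc[of i] iI ci by auto
  show "tm ` level T (Suc i) \<subseteq> level G (Suc k)" using cs len_tm unfolding level_def by auto
  show "level G (Suc k) \<subseteq> tm ` level T (Suc i)"
  proof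
    fix y assume "y \<in> level G (Suc k)"
    then obtain x where x: "x \<in> T" "y = tm x" "cnt (length x) = Suc k" unfolding level_def using len_tm by auto
    have le: "Suc i \<le> length x"
    proof (rule ccontr)
      assume "\<not> Suc i \<le> length x"
      then have "cnt (length x) \<le> cnt i" by (intro cnt_mono) auto
      then show False using ci x by auto
    qed
    have "tm (take (Suc i) x) = tm x" using tm_take[OF _ le] cs x by auto
    moreover have "take (Suc i) x \<in> level T (Suc i)" using closure_take[OF _ le] x T_closed le unfolding level_def by auto
    ultimately show "y \<in> tm ` level T (Suc i)" using x by (metis image_eqI)
  qed
qed

end


lemma img_Collect: "(\<forall>z\<in>A. P z \<longleftrightarrow> Q (f z)) \<Longrightarrow> f ` {z\<in>A. P z} = {z'\<in>f ` A. Q z'}"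
  by auto

lemma img_app: "(\<forall>z\<in>M. f (z @ [c]) = f z @ [c]) \<Longrightarrow> f ` app M c = app (f ` M) c"
  unfolding app_def by (auto simp: image_image)

context PT begin

lemma tm_rel:
  assumes mx: "x \<in> level T i" and my: "y \<in> level T i"
  shows "(tm x = tm y \<longleftrightarrow> x = y) \<and> (lex_less (tm x) (tm y) \<longleftrightarrow> lex_less x y) \<and>
    (perp (tm x) (tm y) \<longleftrightarrow> perp x y) \<and> (preceq (tm x) (tm y) \<longleftrightarrow> preceq x y) \<and>
    (prec (tm x) (tm y) \<longleftrightarrow> prec x y) \<and>
    (related (tm x) (tm y) \<longleftrightarrow> related x y) \<and> (unrelated (tm x) (tm y) \<longleftrightarrow> unrelated x y)"
proof -
  have r1: "relsame x y (tm x) (tm y)" and r2: "relsame y x (tm y) (tm x)" using tau_relsame mx my by auto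
  show ?thesis using r1 r2 unfolding relsame_def lex_less_def preceq_def related_def unrelated_def by auto
qed

lemma tm_snoc: "i \<in> I \<Longrightarrow> x \<in> level T i \<Longrightarrow> tm (x @ [c]) = tm x @ [c]"
  unfolding tm_def' nths_snoc level_def by auto

lemma tm_inj: "inj_on tm (level T i)"
  unfolding inj_on_def using tm_rel by auto

lemma transport_leaf:
  assumes iI: "i \<in> I" and ci: "cnt i = k" and st: "leaf_step T i"
  shows "leaf_step G k"
proof -
  obtain w where w: "w \<in> level T i" and c: "(\<forall>u \<in> level T i - {w}. related w u) \<and> level T (Suc i) = app (level T i - {w}) X"
    using st unfolding leaf_step_def by (rule bexE)
  have A: "level G k = tm ` level T i" using levelG_k[OF iI ci] .
  have B: "level G (Suc k) = tm ` level T (Suc i)" using levelG_Sk[OF iI ci] .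
  have d: "tm ` (level T i - {w}) = tm ` level T i - {tm w}"
    using inj_on_image_set_diff[OF tm_inj, of "level T i" "{w}"] w by auto
  have e: "level G (Suc k) = app (level G k - {tm w}) X"
    unfolding B A c[THEN conjunct2] d[symmetric] using tm_snoc[OF iI] by (intro img_app) auto
  have r: "\<forall>u \<in> level G k - {tm w}. related (tm w) u"
  proof
    fix u assume "u \<in> level G k - {tm w}"
    then obtain u0 where u0: "u0 \<in> level T i" "u = tm u0" "u0 \<noteq> w" unfolding A by auto
    then show "related (tm w) u" using c tm_rel[OF w u0(1)] by auto
  qed
  have "tm w \<in> level G k" unfolding A using w by auto
  then show ?thesis unfolding leaf_step_def using r e by blast
qed


lemma tr_tools:
  assumes iI: "i \<in> I" and ci: "cnt i = k"
  shows "\<And>P Q. (\<forall>z\<in>level T i. P z \<longleftrightarrow> Q (tm z)) \<Longrightarrow> tm ` {z\<in>level T i. P z} = {z'\<in>level G k. Q z'}"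
    and "\<And>P c. tm ` app {z\<in>level T i. P z} c = app (tm ` {z\<in>level T i. P z}) c"
    and "\<And>z c. z \<in> level T i \<Longrightarrow> tm (z @ [c]) = tm z @ [c]"
proof -
  have A: "level G k = tm ` level T i" using levelG_k[OF iI ci] .
  show "\<And>P Q. (\<forall>z\<in>level T i. P z \<longleftrightarrow> Q (tm z)) \<Longrightarrow> tm ` {z\<in>level T i. P z} = {z'\<in>level G k. Q z'}"
    unfolding A by (rule img_Collect)
  show "\<And>P c. tm ` app {z\<in>level T i. P z} c = app (tm ` {z\<in>level T i. P z}) c"
    using tm_snoc[OF iI] by (intro img_app) auto
  show "\<And>z c. z \<in> level T i \<Longrightarrow> tm (z @ [c]) = tm z @ [c]" using tm_snoc[OF iI] .
qed

lemma transport_branch: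
  assumes iI: "i \<in> I" and ci: "cnt i = k" and st: "branch_step T i"
  shows "branch_step G k"
proof -
  obtain w where w: "w \<in> level T i" and c: "level T (Suc i) = app {z \<in> level T i. lex_less z w} X \<union> {w @ [X], w @ [R]}
                        \<union> app {z \<in> level T i. lex_less w z} R"
    using st unfolding branch_step_def by (rule bexE)
  note tt = tr_tools[OF iI ci]
  have A: "level G k = tm ` level T i" using levelG_k[OF iI ci] .
  have B: "level G (Suc k) = tm ` level T (Suc i)" using levelG_Sk[OF iI ci] .
  have c1: "tm ` {z \<in> level T i. lex_less z w} = {z' \<in> level G k. lex_less z' (tm w)}"
    using tm_rel[OF _ w] by (intro tt(1)) auto
  have c2: "tm ` {z \<in> level T i. lex_less w z} = {z' \<in> level G k. lex_less (tm w) z'}"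
    using tm_rel[OF w] by (intro tt(1)) auto
  have e: "level G (Suc k) = app {z' \<in> level G k. lex_less z' (tm w)} X \<union> {tm w @ [X], tm w @ [R]}
                        \<union> app {z' \<in> level G k. lex_less (tm w) z'} R"
    unfolding B c image_Un tt(2) c1 c2 using tt(3)[OF w] by simp
  have "tm w \<in> level G k" unfolding A using w by auto
  then show ?thesis unfolding branch_step_def using e by (rule bexI[rotated])
qed

lemma transport_perp:
  assumes iI: "i \<in> I" and ci: "cnt i = k" and st: "perp_step T i"
  shows "perp_step G k"
proof -
  obtain v w where vw: "v \<in> level T i" "w \<in> level T i" "unrelated v w" "lex_less v w"
        and eq: "level T (Suc i) = app {z \<in> level T i. lex_less z v} X \<union> {v @ [R]}
         \<union> app {z \<in> level T i. lex_less v z \<and> lex_less z w \<and> perp z v} X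
         \<union> app {z \<in> level T i. lex_less v z \<and> lex_less z w \<and> \<not> perp z v} R
         \<union> {w @ [X]} \<union> app {z \<in> level T i. lex_less w z} R"
        and cA: "\<forall>u \<in> level T i. lex_less v u \<and> lex_less u w \<longrightarrow> perp u v \<or> perp u w"
        using st unfolding perp_step_def by (elim bexE conjE) (rule that; assumption)
  note tt = tr_tools[OF iI ci]
  have A: "level G k = tm ` level T i" using levelG_k[OF iI ci] .
  have B: "level G (Suc k) = tm ` level T (Suc i)" using levelG_Sk[OF iI ci] .
  have r: "\<And>z. z \<in> level T i \<Longrightarrow> (lex_less z v \<longleftrightarrow> lex_less (tm z) (tm v)) \<and> (lex_less v z \<longleftrightarrow> lex_less (tm v) (tm z)) \<and>
      (lex_less z w \<longleftrightarrow> lex_less (tm z) (tm w)) \<and> (lex_less w z \<longleftrightarrow> lex_less (tm w) (tm z)) \<and>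
      (perp z v \<longleftrightarrow> perp (tm z) (tm v)) \<and> (perp z w \<longleftrightarrow> perp (tm z) (tm w))"
    using tm_rel vw(1,2) by blast
  have c1: "tm ` {z \<in> level T i. lex_less z v} = {z' \<in> level G k. lex_less z' (tm v)}"
    using r by (intro tt(1)) auto
  have c2: "tm ` {z \<in> level T i. lex_less v z \<and> lex_less z w \<and> perp z v} =
      {z' \<in> level G k. lex_less (tm v) z' \<and> lex_less z' (tm w) \<and> perp z' (tm v)}"
    using r by (intro tt(1)) auto
  have c3: "tm ` {z \<in> level T i. lex_less v z \<and> lex_less z w \<and> \<not> perp z v} =
      {z' \<in> level G k. lex_less (tm v) z' \<and> lex_less z' (tm w) \<and> \<not> perp z' (tm v)}"
    using r by (intro tt(1)) auto
  have c4: "tm ` {z \<in> level T i. lex_less w z} = {z' \<in> level G k. lex_less (tm w) z'}"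
    using r by (intro tt(1)) auto
  have e: "level G (Suc k) = app {z \<in> level G k. lex_less z (tm v)} X \<union> {tm v @ [R]}
         \<union> app {z \<in> level G k. lex_less (tm v) z \<and> lex_less z (tm w) \<and> perp z (tm v)} X
         \<union> app {z \<in> level G k. lex_less (tm v) z \<and> lex_less z (tm w) \<and> \<not> perp z (tm v)} R
         \<union> {tm w @ [X]} \<union> app {z \<in> level G k. lex_less (tm w) z} R"
    unfolding B eq image_Un tt(2) c1 c2 c3 c4 using tt(3)[OF vw(1)] tt(3)[OF vw(2)] by simp
  have a: "\<forall>u \<in> level G k. lex_less (tm v) u \<and> lex_less u (tm w) \<longrightarrow> perp u (tm v) \<or> perp u (tm w)"
    unfolding A using cA r by auto
  have m: "tm v \<in> level G k" "tm w \<in> level G k" unfolding A using vw by auto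
  have u: "unrelated (tm v) (tm w)" "lex_less (tm v) (tm w)" using tm_rel[OF vw(1,2)] vw(3,4) by auto
  show ?thesis unfolding perp_step_def
    by (intro bexI[of _ "tm v"] bexI[of _ "tm w"] conjI) (rule u(1), rule u(2), rule e, rule a, rule m(2), rule m(1))
qed

lemma transport_prec:
  assumes iI: "i \<in> I" and ci: "cnt i = k" and st: "prec_step T i"
  shows "prec_step G k"
proof -
  obtain v w where vw: "v \<in> level T i" "w \<in> level T i" "unrelated v w" "lex_less v w"
        and eq: "level T (Suc i) = app {z \<in> level T i. lex_less z v \<and> perp z v} X
         \<union> app {z \<in> level T i. lex_less z v \<and> \<not> perp z v} L \<union> {v @ [L]}
         \<union> app {z \<in> level T i. lex_less v z \<and> lex_less z w} X \<union> {w @ [R]}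
         \<union> app {z \<in> level T i. lex_less w z \<and> perp w z} X
         \<union> app {z \<in> level T i. lex_less w z \<and> \<not> perp w z} R"
        and B1: "\<forall>u \<in> level T i. lex_less u v \<longrightarrow> preceq u w \<or> perp u v"
        and B2: "\<forall>u \<in> level T i. lex_less w u \<longrightarrow> preceq v u \<or> perp w u"
        using st unfolding prec_step_def by (elim bexE conjE) (rule that; assumption)
  note tt = tr_tools[OF iI ci]
  have A: "level G k = tm ` level T i" using levelG_k[OF iI ci] .
  have B: "level G (Suc k) = tm ` level T (Suc i)" using levelG_Sk[OF iI ci] .
  have r: "\<And>z. z \<in> level T i \<Longrightarrow> (lex_less z v \<longleftrightarrow> lex_less (tm z) (tm v)) \<and> (lex_less v z \<longleftrightarrow> lex_less (tm v) (tm z)) \<and>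
      (lex_less z w \<longleftrightarrow> lex_less (tm z) (tm w)) \<and> (lex_less w z \<longleftrightarrow> lex_less (tm w) (tm z)) \<and>
      (perp z v \<longleftrightarrow> perp (tm z) (tm v)) \<and> (perp w z \<longleftrightarrow> perp (tm w) (tm z)) \<and>
      (preceq z w \<longleftrightarrow> preceq (tm z) (tm w)) \<and> (preceq v z \<longleftrightarrow> preceq (tm v) (tm z))"
    using tm_rel vw(1,2) by blast
  have c1: "tm ` {z \<in> level T i. lex_less z v \<and> perp z v} = {z' \<in> level G k. lex_less z' (tm v) \<and> perp z' (tm v)}"
    using r by (intro tt(1)) auto
  have c2: "tm ` {z \<in> level T i. lex_less z v \<and> \<not> perp z v} = {z' \<in> level G k. lex_less z' (tm v) \<and> \<not> perp z' (tm v)}"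
    using r by (intro tt(1)) auto
  have c3: "tm ` {z \<in> level T i. lex_less v z \<and> lex_less z w} = {z' \<in> level G k. lex_less (tm v) z' \<and> lex_less z' (tm w)}"
    using r by (intro tt(1)) auto
  have c4: "tm ` {z \<in> level T i. lex_less w z \<and> perp w z} = {z' \<in> level G k. lex_less (tm w) z' \<and> perp (tm w) z'}"
    using r by (intro tt(1)) auto
  have c5: "tm ` {z \<in> level T i. lex_less w z \<and> \<not> perp w z} = {z' \<in> level G k. lex_less (tm w) z' \<and> \<not> perp (tm w) z'}"
    using r by (intro tt(1)) auto
  have e: "level G (Suc k) = app {z \<in> level G k. lex_less z (tm v) \<and> perp z (tm v)} X
         \<union> app {z \<in> level G k. lex_less z (tm v) \<and> \<not> perp z (tm v)} L \<union> {tm v @ [L]}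
         \<union> app {z \<in> level G k. lex_less (tm v) z \<and> lex_less z (tm w)} X \<union> {tm w @ [R]}
         \<union> app {z \<in> level G k. lex_less (tm w) z \<and> perp (tm w) z} X
         \<union> app {z \<in> level G k. lex_less (tm w) z \<and> \<not> perp (tm w) z} R"
    unfolding B eq image_Un tt(2) c1 c2 c3 c4 c5 using tt(3)[OF vw(1)] tt(3)[OF vw(2)] by simp
  have b1: "\<forall>u \<in> level G k. lex_less u (tm v) \<longrightarrow> preceq u (tm w) \<or> perp u (tm v)"
    unfolding A using B1 r by auto
  have b2: "\<forall>u \<in> level G k. lex_less (tm w) u \<longrightarrow> preceq (tm v) u \<or> perp (tm w) u"
    unfolding A using B2 r by auto
  have m: "tm v \<in> level G k" "tm w \<in> level G k" unfolding A using vw by auto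
  have u: "unrelated (tm v) (tm w)" "lex_less (tm v) (tm w)" using tm_rel[OF vw(1,2)] vw(3,4) by auto
  show ?thesis unfolding prec_step_def
    by (intro bexI[of _ "tm v"] bexI[of _ "tm w"] conjI) (rule u(1), rule u(2), rule e, rule b1, rule b2, rule m(2), rule m(1))
qed

end


lemma exactly_one:
  "(a \<or> b \<or> c \<or> d) \<Longrightarrow> \<not> (a \<and> b) \<Longrightarrow> \<not> (a \<and> c) \<Longrightarrow> \<not> (a \<and> d) \<Longrightarrow> \<not> (b \<and> c) \<Longrightarrow> \<not> (b \<and> d) \<Longrightarrow> \<not> (c \<and> d)
   \<Longrightarrow> length (filter id [a, b, c, d]) = 1"
  by (cases a; cases b; cases c; cases d) auto

context PT begin

lemma card_img: "card ((\<lambda>z. z @ [c z]) ` A) = card A"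
  by (rule card_image) (auto simp: inj_on_def)

lemma step_props:
  assumes fin: "finite (level Q k)"
  shows "leaf_step Q k \<Longrightarrow> card (level Q (Suc k)) < card (level Q k)"
    and "branch_step Q k \<Longrightarrow> card (level Q (Suc k)) = Suc (card (level Q k))"
    and "perp_step Q k \<Longrightarrow> card (level Q (Suc k)) = card (level Q k) \<and> (\<forall>x\<in>level Q (Suc k). \<forall>z. x \<noteq> z @ [L])"
    and "prec_step Q k \<Longrightarrow> card (level Q (Suc k)) = card (level Q k) \<and> (\<exists>x\<in>level Q (Suc k). \<exists>z. x = z @ [L])"
proof -
  note el = eqlen_level[of Q k]
  show "leaf_step Q k \<Longrightarrow> card (level Q (Suc k)) < card (level Q k)"
  proof -
    assume "leaf_step Q k"
    then obtain w where w: "w \<in> level Q k" and c: "(\<forall>u \<in> level Q k - {w}. related w u) \<and> level Q (Suc k) = app (level Q k - {w}) X"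
      unfolding leaf_step_def by (rule bexE)
    show ?thesis unfolding c[THEN conjunct2] using card_app_minus[OF fin w] .
  qed
  show "branch_step Q k \<Longrightarrow> card (level Q (Suc k)) = Suc (card (level Q k))"
  proof -
    assume "branch_step Q k"
    then obtain w where w: "w \<in> level Q k" and c: "level Q (Suc k) = app {z \<in> level Q k. lex_less z w} X \<union> {w @ [X], w @ [R]}
                        \<union> app {z \<in> level Q k. lex_less w z} R"
      unfolding branch_step_def by (rule bexE)
    show ?thesis unfolding c branch_eq[OF el w] using card_branch[OF fin w] .
  qed
  show "perp_step Q k \<Longrightarrow> card (level Q (Suc k)) = card (level Q k) \<and> (\<forall>x\<in>level Q (Suc k). \<forall>z. x \<noteq> z @ [L])"
  proof -
    assume "perp_step Q k"
    then obtain v w where vw: "v \<in> level Q k" "w \<in> level Q k" "unrelated v w" "lex_less v w"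
        and eq: "level Q (Suc k) = app {z \<in> level Q k. lex_less z v} X \<union> {v @ [R]}
         \<union> app {z \<in> level Q k. lex_less v z \<and> lex_less z w \<and> perp z v} X
         \<union> app {z \<in> level Q k. lex_less v z \<and> lex_less z w \<and> \<not> perp z v} R
         \<union> {w @ [X]} \<union> app {z \<in> level Q k. lex_less w z} R"
        unfolding perp_step_def by (elim bexE conjE) (rule that; assumption)
    have e: "level Q (Suc k) = (\<lambda>z. z @ [cP lex_less perp v w z]) ` level Q k"
      unfolding eq perp_eq[OF el vw(1,2,4)] ..
    show ?thesis unfolding e card_img using cP_not_L[of lex_less perp v w] by auto
  qed
  show "prec_step Q k \<Longrightarrow> card (level Q (Suc k)) = card (level Q k) \<and> (\<exists>x\<in>level Q (Suc k). \<exists>z. x = z @ [L])"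
  proof -
    assume "prec_step Q k"
    then obtain v w where vw: "v \<in> level Q k" "w \<in> level Q k" "unrelated v w" "lex_less v w"
        and eq: "level Q (Suc k) = app {z \<in> level Q k. lex_less z v \<and> perp z v} X
         \<union> app {z \<in> level Q k. lex_less z v \<and> \<not> perp z v} L \<union> {v @ [L]}
         \<union> app {z \<in> level Q k. lex_less v z \<and> lex_less z w} X \<union> {w @ [R]}
         \<union> app {z \<in> level Q k. lex_less w z \<and> perp w z} X
         \<union> app {z \<in> level Q k. lex_less w z \<and> \<not> perp w z} R"
        unfolding prec_step_def by (elim bexE conjE) (rule that; assumption)
    have e: "level Q (Suc k) = (\<lambda>z. z @ [cQ lex_less perp v w z]) ` level Q k"
      unfolding eq prec_eq[OF el vw(1,2,4)] ..
    have "v @ [L] \<in> level Q (Suc k)" unfolding eq by simp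
    moreover have "card (level Q (Suc k)) = card (level Q k)" unfolding e card_img ..
    ultimately show ?thesis by blast
  qed
qed

lemma exactly_one_step:
  assumes fin: "finite (level Q k)" and one: "leaf_step Q k \<or> branch_step Q k \<or> perp_step Q k \<or> prec_step Q k"
  shows "length (filter id [leaf_step Q k, branch_step Q k, perp_step Q k, prec_step Q k]) = 1"
proof (rule exactly_one[OF one])
  note sp = step_props[OF fin]
  show "\<not> (leaf_step Q k \<and> branch_step Q k)"
  proof
    assume h: "leaf_step Q k \<and> branch_step Q k"
    then show False using sp(1)[of] sp(2) h by auto
  qed
  show "\<not> (leaf_step Q k \<and> perp_step Q k)"
  proof
    assume h: "leaf_step Q k \<and> perp_step Q k"
    then show False using sp(1) sp(3) h by auto
  qed
  show "\<not> (leaf_step Q k \<and> prec_step Q k)"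
  proof
    assume h: "leaf_step Q k \<and> prec_step Q k"
    then show False using sp(1) sp(4) h by auto
  qed
  show "\<not> (branch_step Q k \<and> perp_step Q k)"
  proof
    assume h: "branch_step Q k \<and> perp_step Q k"
    then show False using sp(2) sp(3) h by auto
  qed
  show "\<not> (branch_step Q k \<and> prec_step Q k)"
  proof
    assume h: "branch_step Q k \<and> prec_step Q k"
    then show False using sp(2) sp(4) h by auto
  qed
  show "\<not> (perp_step Q k \<and> prec_step Q k)"
  proof
    assume h: "perp_step Q k \<and> prec_step Q k"
    then show False using sp(3) sp(4) h by blast
  qed
qed

lemma G_step:
  assumes ex: "\<exists>g\<in>G. k < length g"
  shows "leaf_step G k \<or> branch_step G k \<or> perp_step G k \<or> prec_step G k"
proof -
  obtain x where x: "x \<in> T" "k < length (tm x)" using ex by blast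
  then obtain i where i: "i < length x" "i \<in> I" "cnt i = k" using find_i len_tm by metis
  have ne: "take (Suc i) x \<in> level T (Suc i)" using closure_take[of x S' "Suc i"] x i T_closed unfolding level_def by auto
  consider (a) "level T (Suc i) = {}"
    | (b) "\<exists>w\<in>level T i. (\<forall>u\<in>level T i - {w}. related w u) \<and> level T (Suc i) = app (level T i - {w}) X"
    | (c) "\<exists>w\<in>level T i. level T (Suc i) = (\<lambda>p. fst p @ [snd p]) ` ((\<lambda>z. (z, cB w z)) ` level T i \<union> {(w, X)})"
    | (d) "\<exists>c. level T (Suc i) = (\<lambda>z. z @ [c z]) ` level T i \<and> relok (level T i) c"
    | (e) "perp_step T i" | (f) "prec_step T i"
    using T_cases[of i] by blast
  then show ?thesis
  proof cases
    case a then show ?thesis using ne by auto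
  next
    case b
    then have "leaf_step T i" unfolding leaf_step_def .
    then show ?thesis using transport_leaf[OF i(2,3)] by blast
  next
    case c
    then obtain w where w: "w \<in> level T i" and e: "level T (Suc i) = (\<lambda>p. fst p @ [snd p]) ` ((\<lambda>z. (z, cB w z)) ` level T i \<union> {(w, X)})"
      by (rule bexE)
    have "branch_step T i" unfolding branch_step_def
      by (rule bexI[of _ w], unfold branch_eq[OF eqlen_level w], rule e, rule w)
    then show ?thesis using transport_branch[OF i(2,3)] by blast
  next
    case d
    then obtain c where "level T (Suc i) = (\<lambda>z. z @ [c z]) ` level T i" "relok (level T i) c" by blast
    then have "i \<notin> I" by (rule relabel_not_interesting)
    then show ?thesis using i by blast
  next
    case e then show ?thesis using transport_perp[OF i(2,3)] by blast
  next
    case f then show ?thesis using transport_prec[OF i(2,3)] by blast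
  qed
qed

lemma closure_tau: "closure (tm ` S') = tm ` T"
proof
  show "closure (tm ` S') \<subseteq> tm ` T"
  proof
    fix y assume "y \<in> closure (tm ` S')"
    then obtain s n where s: "s \<in> S'" "n \<le> length (tm s)" "y = take n (tm s)" unfolding closure_def by blast
    have "\<exists>m\<le>length s. take n (tm s) = tm (take m s)"
      using s(2)
    proof (induction s arbitrary: n rule: rev_induct)
      case Nil then show ?case by (simp add: tm_def')
    next
      case (snoc a s)
      show ?case
      proof (cases "n \<le> length (tm s)")
        case True
        then obtain m where m: "m \<le> length s" "take n (tm s) = tm (take m s)" using snoc.IH by blast
        have "take n (tm (s @ [a])) = take n (tm s)" unfolding tm_def' nths_snoc using True by (simp add: tm_def')
        then show ?thesis using m by (intro exI[of _ m]) auto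
      next
        case False
        then have "n = length (tm (s @ [a]))" using snoc.prems unfolding tm_def' nths_snoc
          by (auto split: if_splits simp: tm_def')
        then show ?thesis by (intro exI[of _ "length (s @ [a])"]) auto
      qed
    qed
    then obtain m where "m \<le> length s" "y = tm (take m s)" using s by auto
    moreover have "take m s \<in> T" using s(1) \<open>m \<le> length s\<close> unfolding closure_def by blast
    ultimately show "y \<in> tm ` T" by blast
  qed
  show "tm ` T \<subseteq> closure (tm ` S')"
  proof
    fix y assume "y \<in> tm ` T"
    then obtain s m where s: "s \<in> S'" "m \<le> length s" "y = tm (take m s)" unfolding closure_def by blast
    have "nths s I = nths (take m s) I @ nths (drop m s) {j. j + length (take m s) \<in> I}"
      using nths_append[of "take m s" "drop m s" I] by simp
    then have "y = take (length y) (tm s)" using s(3) unfolding tm_def' by simp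
    moreover have "length y \<le> length (tm s)" using s(3) unfolding tm_def' \<open>nths s I = _\<close> by simp
    ultimately show "y \<in> closure (tm ` S')" unfolding closure_def using s(1) by blast
  qed
qed


end

theorem mainTheorem3:
  assumes "poset_type S" and "S' \<subseteq> leaves S"
  shows "tau (closure S') = closure (tau S') \<and> poset_type (closure (tau S'))"
proof -
  interpret PT S S' using assms by unfold_locales
  have int: "interesting (closure S') = interesting S'"
    unfolding interesting_def closure_idem ..
  have tm1: "tau_map (closure S') = tau_map S'"
    unfolding tau_map_def[abs_def] int ..
  have t1: "tau (closure S') = tau_map S' ` closure S'" unfolding tau_def tm1 ..
  have t2: "tau S' = tau_map S' ` S'" unfolding tau_def ..
  have eq: "closure (tau S') = tau_map S' ` closure S'" unfolding t2 by (rule closure_tau)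
  have "poset_type (tau_map S' ` closure S')"
    unfolding poset_type_def
  proof (intro conjI allI impI)
    show "tau_map S' ` closure S' = closure (tau_map S' ` closure S')"
      using closure_tau closure_idem by metis
    fix k assume ex: "\<exists>w\<in>tau_map S' ` closure S'. k < length w"
    have fin: "finite (level (tau_map S' ` closure S') k)"
      by (rule finite_level_closed) (metis closure_tau closure_idem)
    show "length (filter id [leaf_step (tau_map S' ` closure S') k, branch_step (tau_map S' ` closure S') k,
        perp_step (tau_map S' ` closure S') k, prec_step (tau_map S' ` closure S') k]) = 1"
      by (rule exactly_one_step[OF fin G_step[OF ex]])
  qed
  then show ?thesis using t1 eq by simp
qed


end
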